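(* Let $X$ be a compact interval, $m$ normalized Lebesgue measure on $X$, $\Omega$ a measurable space, and $\{T_\omega\}_{\omega\in\Omega}$ a family of maps $T_\omega\colon X\to X$ as described in the context, with inverse branches $g_{z,\omega}$, $z\in Z$. Let $\{\mathbb{P}_\epsilon\}_{\epsilon\in V}$ be a family of probability measures on $\Omega$, $V$ a neighbourhood of $0$, and let $L_{\mathbb{P}_\epsilon}$ be the associated random transfer operators. Assume: (B) for $\epsilon\in V$ the operators $L_{\mathbb{P}_\epsilon}$ admit a uniform spectral gap on $C^1(X)$, and the random system $(\Omega,\{T_\omega\},\mathbb{P}_\epsilon)$ admits a unique stationary density $h_\epsilon\in C^2(X)$; (B1) for $\Phi=h_0$, the partial derivatives $\partial_\epsilon\psi_z(\epsilon,x)$, $\partial_x\psi_z(\epsilon,x)$, $\partial_x\partial_\epsilon\psi_z(\epsilon,x)$, $\partial_\epsilon\partial_x\psi_z(\epsilon,x)$ exist and are jointly continuous in $(\epsilon,x)\in V\times X$, and for $i=0,1$, $\sum_{z\in Z}\sup_{\epsilon\in V}\sup_{x\in X}|\partial_\epsilon\psi_z^{(i)}(\epsilon,x)|<\infty$, where $\psi_z^{(0)}=\psi_z$, $\psi_z^{(1)}=\partial_x\psi_z$; (B2) for every $\Phi\in C^1(X)$, $\psi_z(\epsilon,x)$ and $\partial_x\psi_z(\epsilon,x)$ exist and are jointly continuous, and for $i=0,1$, $\sum_{z\in Z}\sup_{\epsilon\in V}\sup_{x\in X}|\psi_z^{(i)}(\epsilon,x)|<\infty$. Then there exists $h^*\in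 C^1(X)$ such that $\left\|\frac{h_\epsilon-h_0}{\epsilon}-h^*\right\|_{C^1}\to 0$ as $\epsilon\to0$, and $$h^*=(I-L_{\mathbb{P}_0})^{-1}\,\partial_\epsilon L_{\mathbb{P}_\epsilon}h_0\big|_{\epsilon=0},\qquad \partial_\epsilon L_{\mathbb{P}_\epsilon}h_0\big|_{\epsilon=0}=\partial_\epsilon\sum_{z\in Z}\int_\Omega [h_0\circ g_{z,\omega}\,|g_{z,\omega}'|]\,d\mathbb{P}_\epsilon(\omega)\Big|_{\epsilon=0}.$$
   Context: For each $\omega\in\Omega$ there is a finite or countable set $Z$ (common to all $\omega$, with empty branches allowed and ignored in sums) and a partition mod $0$ of $X$ into open intervals $X_{z,\omega}$, $z\in Z$, such that $T_\omega|_{X_{z,\omega}}$ is $C^3$ and onto $X$; $g_{z,\omega}\colon X\to X_{z,\omega}$ is its inverse. The transfer operator of $T_\omega$ is $L_{T_\omega}\Phi=\sum_{z\in Z}\Phi\circ g_{z,\omega}|g_{z,\omega}'|$, and $L_{\mathbb{P}}\Phi=\int_\Omega L_{T_\omega}\Phi\,d\mathbb{P}(\omega)$. A stationary density is $h\in L^1(m)$, $h\ge0$, $\int h\,dm=1$, with $L_{\mathbb{P}}h=h$ (density of an absolutely continuous measure $\mu$ with $\int\int\phi\circ T_\omega\,d\mathbb{P}\,d\mu=\int\phi\,d\mu$ for bounded measurable $\phi$). For $\Phi\in L^1(X)$ and $z\in Z$, $\psi_z(\epsilon,x)=\int_\Omega[\Phi\circ g_{z,\omega}|g_{z,\omega}'|](x)\,d\mathbb{P}_\epsilon(\omega)$.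 A family of operators $L_\epsilon$ has a uniform spectral gap on a Banach space $\mathcal{B}$ of functions if there are $\theta\in(0,1)$ and $C>0$ independent of $\epsilon$ such that $\|L_\epsilon^n\phi\|_{\mathcal B}\le C\theta^n\|\phi\|_{\mathcal B}$ for all $n\ge1$ and all $\phi\in\mathcal{B}$ with $\int\phi\,dm=0$. $\|f\|_{C^1}=\|f\|_\infty+\|f'\|_\infty$. The inverse $(I-L_{\mathbb{P}_0})^{-1}$ is taken on zero-average $C^1$ functions. *)

theory Defs
  imports "HOL-Probability.Probability"
begin

definition mX :: "real \<Rightarrow> real \<Rightarrow> real measure" where
  "mX a b = uniform_measure lborel {a..b}"

fun Ck_on :: "nat \<Rightarrow> real set \<Rightarrow> (real \<Rightarrow> real) \<Rightarrow> bool" where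
  "Ck_on 0 S f = continuous_on S f"
| "Ck_on (Suc k) S f = ((\<forall>x\<in>S. f differentiable (at x within S)) \<and>
      Ck_on k S (\<lambda>x. vector_derivative f (at x within S)))"

definition dX :: "real \<Rightarrow> real \<Rightarrow> (real \<Rightarrow> real) \<Rightarrow> real \<Rightarrow> real" where
  "dX a b f x = vector_derivative f (at x within {a..b})"

definition C1norm :: "real \<Rightarrow> real \<Rightarrow> (real \<Rightarrow> real) \<Rightarrow> real" where
  "C1norm a b f = (SUP x\<in>{a..b}. \<bar>f x\<bar>) + (SUP x\<in>{a..b}. \<bar>dX a b f x\<bar>)"

text \<open>Branch structure of the random maps: for every omega, the intervals I z omega
  (z in Z, possibly empty) form a partition mod 0 of X into open intervals; T omega is C^3 on each
  nonempty branch and maps it bijectively onto X (mod the endpoints); g z omega is the inverse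
  branch, continuously extended to X.\<close>
definition branch_system ::
  "real \<Rightarrow> real \<Rightarrow> nat set \<Rightarrow> (nat \<Rightarrow> 'w \<Rightarrow> real set) \<Rightarrow> ('w \<Rightarrow> real \<Rightarrow> real)
   \<Rightarrow> (nat \<Rightarrow> 'w \<Rightarrow> real \<Rightarrow> real) \<Rightarrow> bool" where
  "branch_system a b Z I T g \<longleftrightarrow> a < b \<and> (\<forall>\<omega>.
      (\<forall>x\<in>{a..b}. T \<omega> x \<in> {a..b}) \<and>
      disjoint_family_on (\<lambda>z. I z \<omega>) Z \<and>
      ({a..b} - (\<Union>z\<in>Z. I z \<omega>)) \<in> null_sets lborel \<and>
      (\<forall>z\<in>Z. I z \<omega> = {} \<or>
         ((\<exists>c d. a \<le> c \<and> c < d \<and> d \<le> b \<and> I z \<omega> = {c<..<d}) \<and>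
          Ck_on 3 (I z \<omega>) (T \<omega>) \<and>
          bij_betw (T \<omega>) (I z \<omega>) {a<..<b} \<and>
          (\<forall>x\<in>{a<..<b}. g z \<omega> x \<in> I z \<omega> \<and> T \<omega> (g z \<omega> x) = x) \<and>
          g z \<omega> ` {a..b} \<subseteq> closure (I z \<omega>) \<and>
          continuous_on {a..b} (g z \<omega>))))"

definition bterm ::
  "real \<Rightarrow> real \<Rightarrow> (nat \<Rightarrow> 'w \<Rightarrow> real set) \<Rightarrow> (nat \<Rightarrow> 'w \<Rightarrow> real \<Rightarrow> real)
   \<Rightarrow> (real \<Rightarrow> real) \<Rightarrow> nat \<Rightarrow> 'w \<Rightarrow> real \<Rightarrow> real" where
  "bterm a b I g \<Phi> z \<omega> x =
     (if I z \<omega> = {} then 0 else \<Phi> (g z \<omega> x) * \<bar>dX a b (g z \<omega>) x\<bar>)"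

definition LT ::
  "real \<Rightarrow> real \<Rightarrow> nat set \<Rightarrow> (nat \<Rightarrow> 'w \<Rightarrow> real set) \<Rightarrow> (nat \<Rightarrow> 'w \<Rightarrow> real \<Rightarrow> real)
   \<Rightarrow> 'w \<Rightarrow> (real \<Rightarrow> real) \<Rightarrow> real \<Rightarrow> real" where
  "LT a b Z I g \<omega> \<Phi> x = (\<Sum>\<^sub>\<infinity>z\<in>Z. bterm a b I g \<Phi> z \<omega> x)"

definition LP ::
  "real \<Rightarrow> real \<Rightarrow> nat set \<Rightarrow> (nat \<Rightarrow> 'w \<Rightarrow> real set) \<Rightarrow> (nat \<Rightarrow> 'w \<Rightarrow> real \<Rightarrow> real)
   \<Rightarrow> 'w measure \<Rightarrow> (real \<Rightarrow> real) \<Rightarrow> real \<Rightarrow> real" where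
  "LP a b Z I g Q \<Phi> x = (\<integral>\<omega>. LT a b Z I g \<omega> \<Phi> x \<partial>Q)"

definition psi ::
  "real \<Rightarrow> real \<Rightarrow> (nat \<Rightarrow> 'w \<Rightarrow> real set) \<Rightarrow> (nat \<Rightarrow> 'w \<Rightarrow> real \<Rightarrow> real)
   \<Rightarrow> (real \<Rightarrow> 'w measure) \<Rightarrow> (real \<Rightarrow> real) \<Rightarrow> nat \<Rightarrow> real \<Rightarrow> real \<Rightarrow> real" where
  "psi a b I g P \<Phi> z \<epsilon> x = (\<integral>\<omega>. bterm a b I g \<Phi> z \<omega> x \<partial>(P \<epsilon>))"

definition d_eps :: "(real \<Rightarrow> real \<Rightarrow> real) \<Rightarrow> real \<Rightarrow> real \<Rightarrow> real" where
  "d_eps f \<epsilon> x = deriv (\<lambda>e. f e x) \<epsilon>"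

definition d_x :: "real \<Rightarrow> real \<Rightarrow> (real \<Rightarrow> real \<Rightarrow> real) \<Rightarrow> real \<Rightarrow> real \<Rightarrow> real" where
  "d_x a b f \<epsilon> x = dX a b (\<lambda>y. f \<epsilon> y) x"

definition stationary_density :: "real \<Rightarrow> real \<Rightarrow> ((real \<Rightarrow> real) \<Rightarrow> real \<Rightarrow> real) \<Rightarrow> (real \<Rightarrow> real) \<Rightarrow> bool" where
  "stationary_density a b L h \<longleftrightarrow>
     integrable (mX a b) h \<and> (AE x in mX a b. h x \<ge> 0) \<and> integral\<^sup>L (mX a b) h = 1 \<and>
     (AE x in mX a b. L h x = h x)"

definition uniform_spectral_gap_C1 ::
  "real \<Rightarrow> real \<Rightarrow> real set \<Rightarrow> (real \<Rightarrow> (real \<Rightarrow> real) \<Rightarrow> real \<Rightarrow> real) \<Rightarrow> bool" where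
  "uniform_spectral_gap_C1 a b V L \<longleftrightarrow>
     (\<forall>\<epsilon>\<in>V. \<forall>\<phi>. Ck_on 1 {a..b} \<phi> \<longrightarrow> Ck_on 1 {a..b} (L \<epsilon> \<phi>)) \<and>
     (\<exists>\<theta> C. 0 < \<theta> \<and> \<theta> < 1 \<and> 0 < C \<and>
        (\<forall>\<epsilon>\<in>V. \<forall>n\<ge>1. \<forall>\<phi>. Ck_on 1 {a..b} \<phi> \<and> integral\<^sup>L (mX a b) \<phi> = 0 \<longrightarrow>
            C1norm a b ((L \<epsilon> ^^ n) \<phi>) \<le> C * \<theta> ^ n * C1norm a b \<phi>))"

definition sum_sup :: "nat set \<Rightarrow> real set \<Rightarrow> real set \<Rightarrow> (nat \<Rightarrow> real \<Rightarrow> real \<Rightarrow> real) \<Rightarrow> ennreal" where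
  "sum_sup Z V S F = (\<Sum>\<^sub>\<infinity>z\<in>Z. (SUP \<epsilon>\<in>V. SUP x\<in>S. ennreal \<bar>F z \<epsilon> x\<bar>))"

end

theory Submission
  imports Defs
begin

lemma C1_iff: "Ck_on 1 S f \<longleftrightarrow> (\<forall>x\<in>S. f differentiable (at x within S)) \<and>
   continuous_on S (\<lambda>x. vector_derivative f (at x within S))"
  by simp

lemma C1_cont: "Ck_on 1 S f \<Longrightarrow> continuous_on S f"
  unfolding C1_iff
  by (meson continuous_on_eq_continuous_within differentiable_imp_continuous_within)

lemma C1_dX_cont: "Ck_on 1 {a..b} f \<Longrightarrow> continuous_on {a..b} (dX a b f)"
  unfolding C1_iff dX_def by auto

lemma dX_has:
  assumes "Ck_on 1 {a..b} f" "x \<in> {a..b}"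
  shows "(f has_real_derivative dX a b f x) (at x within {a..b})"
  using assms unfolding C1_iff dX_def
  by (simp add: has_real_derivative_iff_has_vector_derivative vector_derivative_works)

lemma dX_unique:
  assumes "a < b" "x \<in> {a..b}" "(f has_real_derivative D) (at x within {a..b})"
  shows "dX a b f x = D"
  using assms unfolding dX_def
  by (simp add: has_real_derivative_iff_has_vector_derivative vector_derivative_within_closed_interval)

lemma dX_cong:
  assumes "x \<in> {a..b}" "\<And>y. y \<in> {a..b} \<Longrightarrow> f y = g y"
  shows "dX a b f x = dX a b g x"
proof -
  have "(f has_vector_derivative D) (at x within {a..b}) \<longleftrightarrow> (g has_vector_derivative D) (at x within {a..b})" for D
    using has_vector_derivative_transform[of x "{a..b}" g f D] has_vector_derivative_transform[of x "{a..b}" f g D] assms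
    by auto
  then show ?thesis unfolding dX_def vector_derivative_def by simp
qed

lemma C1_intro:
  assumes "a < b" "\<And>x. x \<in> {a..b} \<Longrightarrow> (f has_real_derivative f' x) (at x within {a..b})"
    "continuous_on {a..b} f'"
  shows "Ck_on 1 {a..b} f" "\<And>x. x \<in> {a..b} \<Longrightarrow> dX a b f x = f' x"
proof -
  show d: "\<And>x. x \<in> {a..b} \<Longrightarrow> dX a b f x = f' x"
    using assms dX_unique by blast
  have "continuous_on {a..b} (\<lambda>x. vector_derivative f (at x within {a..b}))"
    using continuous_on_cong[THEN iffD1, OF refl _ assms(3), of "\<lambda>x. vector_derivative f (at x within {a..b})"] d
    unfolding dX_def by auto
  moreover have "\<forall>x\<in>{a..b}. f differentiable (at x within {a..b})"
    using assms(2) real_differentiable_def by (metis differentiableI)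
  ultimately show "Ck_on 1 {a..b} f" unfolding C1_iff by auto
qed

lemma C1_cong:
  assumes "Ck_on 1 {a..b} f" "\<And>y. y \<in> {a..b} \<Longrightarrow> f y = g y"
  shows "Ck_on 1 {a..b} g"
proof -
  have "g differentiable (at x within {a..b})" if "x \<in> {a..b}" for x
    using assms that unfolding C1_iff
    by (metis has_real_derivative_iff_has_vector_derivative has_vector_derivative_transform
        real_differentiable_def vector_derivative_works differentiableI)
  moreover have "continuous_on {a..b} (\<lambda>x. vector_derivative g (at x within {a..b}))"
  proof -
    have "continuous_on {a..b} (dX a b f)" by (rule C1_dX_cont[OF assms(1)])
    moreover have "\<And>x. x \<in> {a..b} \<Longrightarrow> dX a b f x = dX a b g x" using assms(2) by (intro dX_cong) auto
    ultimately have "continuous_on {a..b} (dX a b g)" using continuous_on_cong[of "{a..b}" "{a..b}" "dX a b f" "dX a b g"] by simp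
    then show ?thesis unfolding dX_def by simp
  qed
  ultimately show ?thesis unfolding C1_iff by auto
qed

lemma C1_lin:
  assumes "a < b" "Ck_on 1 {a..b} f" "Ck_on 1 {a..b} g"
  shows "Ck_on 1 {a..b} (\<lambda>x. c * f x + d * g x)"
    "\<And>x. x \<in> {a..b} \<Longrightarrow> dX a b (\<lambda>x. c * f x + d * g x) x = c * dX a b f x + d * dX a b g x"
proof -
  have der: "((\<lambda>x. c * f x + d * g x) has_real_derivative c * dX a b f x + d * dX a b g x) (at x within {a..b})"
    if "x \<in> {a..b}" for x
    using dX_has[OF assms(2) that] dX_has[OF assms(3) that]
    by (auto intro!: derivative_eq_intros)
  have cont: "continuous_on {a..b} (\<lambda>x. c * dX a b f x + d * dX a b g x)"
    using assms(2,3) unfolding C1_iff dX_def by (intro continuous_intros) auto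
  show "Ck_on 1 {a..b} (\<lambda>x. c * f x + d * g x)"
    "\<And>x. x \<in> {a..b} \<Longrightarrow> dX a b (\<lambda>x. c * f x + d * g x) x = c * dX a b f x + d * dX a b g x"
    using C1_intro[OF assms(1) der cont] by auto
qed

lemma C1_const: "a < b \<Longrightarrow> Ck_on 1 {a..b} (\<lambda>x. c)"
  using C1_intro[of a b "\<lambda>x. c" "\<lambda>x. 0"] by auto


lemma cont_bdd:
  assumes "continuous_on {a..b} (f::real\<Rightarrow>real)"
  shows "bdd_above ((\<lambda>x. \<bar>f x\<bar>) ` {a..b})"
proof -
  have "compact ((\<lambda>x. \<bar>f x\<bar>) ` {a..b})"
    by (intro compact_continuous_image continuous_intros assms) auto
  then show ?thesis by (simp add: bounded_imp_bdd_above compact_imp_bounded)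
qed

lemma N_upper:
  assumes "Ck_on 1 {a..b} f" "x \<in> {a..b}"
  shows "\<bar>f x\<bar> \<le> C1norm a b f" "\<bar>dX a b f x\<bar> \<le> C1norm a b f"
proof -
  have b1: "bdd_above ((\<lambda>x. \<bar>f x\<bar>) ` {a..b})" by (rule cont_bdd[OF C1_cont[OF assms(1)]])
  have b2: "bdd_above ((\<lambda>x. \<bar>dX a b f x\<bar>) ` {a..b})" by (rule cont_bdd[OF C1_dX_cont[OF assms(1)]])
  have s1: "\<bar>f x\<bar> \<le> (SUP x\<in>{a..b}. \<bar>f x\<bar>)" by (rule cSUP_upper[OF assms(2) b1])
  have s2: "\<bar>dX a b f x\<bar> \<le> (SUP x\<in>{a..b}. \<bar>dX a b f x\<bar>)" by (rule cSUP_upper[OF assms(2) b2])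
  have "0 \<le> \<bar>f x\<bar>" "0 \<le> \<bar>dX a b f x\<bar>" by auto
  then show "\<bar>f x\<bar> \<le> C1norm a b f" "\<bar>dX a b f x\<bar> \<le> C1norm a b f"
    using s1 s2 unfolding C1norm_def by linarith+
qed

lemma N_nonneg: "Ck_on 1 {a..b} f \<Longrightarrow> a \<le> b \<Longrightarrow> 0 \<le> C1norm a b f"
  using N_upper(1)[of a b f a] by fastforce

lemma N_le:
  assumes "a \<le> b" "\<And>x. x \<in> {a..b} \<Longrightarrow> \<bar>f x\<bar> \<le> A" "\<And>x. x \<in> {a..b} \<Longrightarrow> \<bar>dX a b f x\<bar> \<le> B"
  shows "C1norm a b f \<le> A + B"
proof -
  have "(SUP x\<in>{a..b}. \<bar>f x\<bar>) \<le> A" using assms by (intro cSUP_least) auto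
  moreover have "(SUP x\<in>{a..b}. \<bar>dX a b f x\<bar>) \<le> B" using assms by (intro cSUP_least) auto
  ultimately show ?thesis unfolding C1norm_def by linarith
qed

lemma N_cong:
  assumes "\<And>y. y \<in> {a..b} \<Longrightarrow> f y = g y"
  shows "C1norm a b f = C1norm a b g"
proof -
  have "dX a b f y = dX a b g y" if "y \<in> {a..b}" for y using dX_cong assms that by blast
  then show ?thesis unfolding C1norm_def using assms
    by (metis (no_types, lifting) SUP_cong)
qed


lemma C1_add:
  assumes "a < b" "Ck_on 1 {a..b} f" "Ck_on 1 {a..b} g"
  shows "Ck_on 1 {a..b} (\<lambda>x. f x + g x)"
    "\<And>x. x \<in> {a..b} \<Longrightarrow> dX a b (\<lambda>x. f x + g x) x = dX a b f x + dX a b g x"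
  using C1_lin[OF assms, where c=1 and d=1] by auto

lemma C1_diff:
  assumes "a < b" "Ck_on 1 {a..b} f" "Ck_on 1 {a..b} g"
  shows "Ck_on 1 {a..b} (\<lambda>x. f x - g x)"
    "\<And>x. x \<in> {a..b} \<Longrightarrow> dX a b (\<lambda>x. f x - g x) x = dX a b f x - dX a b g x"
  using C1_lin[OF assms, where c=1 and d="-1"] by auto

lemma C1_cmul:
  assumes "a < b" "Ck_on 1 {a..b} f"
  shows "Ck_on 1 {a..b} (\<lambda>x. c * f x)"
    "\<And>x. x \<in> {a..b} \<Longrightarrow> dX a b (\<lambda>x. c * f x) x = c * dX a b f x"
  using C1_lin[OF assms assms(2), where c=c and d=0] by auto

lemma C1_sum:
  assumes "a < b" "finite A" "\<And>i. i \<in> A \<Longrightarrow> Ck_on 1 {a..b} (f i)"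
  shows "Ck_on 1 {a..b} (\<lambda>x. \<Sum>i\<in>A. f i x) \<and>
    (\<forall>x\<in>{a..b}. dX a b (\<lambda>x. \<Sum>i\<in>A. f i x) x = (\<Sum>i\<in>A. dX a b (f i) x))"
  using assms(2,3)
proof (induction A rule: finite_induct)
  case empty
  then show ?case using C1_const[OF assms(1), of 0] C1_intro[OF assms(1), of "\<lambda>x. 0" "\<lambda>x. 0"] by auto
next
  case (insert i A)
  have h: "Ck_on 1 {a..b} (\<lambda>x. \<Sum>i\<in>A. f i x)" "\<forall>x\<in>{a..b}. dX a b (\<lambda>x. \<Sum>i\<in>A. f i x) x = (\<Sum>i\<in>A. dX a b (f i) x)"
    using insert by auto
  have fi: "Ck_on 1 {a..b} (f i)" using insert by auto
  have eq: "(\<lambda>x. \<Sum>i\<in>insert i A. f i x) = (\<lambda>x. f i x + (\<Sum>i\<in>A. f i x))"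
    using insert by auto
  show ?case unfolding eq using C1_add[OF assms(1) fi h(1)] h(2) insert by auto
qed



lemma N_tri:
  assumes "a < b" "Ck_on 1 {a..b} f" "Ck_on 1 {a..b} g"
  shows "C1norm a b (\<lambda>x. f x + g x) \<le> C1norm a b f + C1norm a b g"
proof -
  have "C1norm a b (\<lambda>x. f x + g x) \<le> (SUP x\<in>{a..b}. \<bar>f x\<bar>) + (SUP x\<in>{a..b}. \<bar>g x\<bar>) +
     ((SUP x\<in>{a..b}. \<bar>dX a b f x\<bar>) + (SUP x\<in>{a..b}. \<bar>dX a b g x\<bar>))"
  proof (rule N_le)
    show "a \<le> b" using assms by simp
  next
    fix x assume x: "x \<in> {a..b}"
    have "\<bar>f x\<bar> \<le> (SUP x\<in>{a..b}. \<bar>f x\<bar>)" by (rule cSUP_upper[OF x cont_bdd[OF C1_cont[OF assms(2)]]])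
    moreover have "\<bar>g x\<bar> \<le> (SUP x\<in>{a..b}. \<bar>g x\<bar>)" by (rule cSUP_upper[OF x cont_bdd[OF C1_cont[OF assms(3)]]])
    ultimately show "\<bar>f x + g x\<bar> \<le> (SUP x\<in>{a..b}. \<bar>f x\<bar>) + (SUP x\<in>{a..b}. \<bar>g x\<bar>)" by linarith
    have "\<bar>dX a b f x\<bar> \<le> (SUP x\<in>{a..b}. \<bar>dX a b f x\<bar>)" by (rule cSUP_upper[OF x cont_bdd[OF C1_dX_cont[OF assms(2)]]])
    moreover have "\<bar>dX a b g x\<bar> \<le> (SUP x\<in>{a..b}. \<bar>dX a b g x\<bar>)" by (rule cSUP_upper[OF x cont_bdd[OF C1_dX_cont[OF assms(3)]]])
    ultimately show "\<bar>dX a b (\<lambda>x. f x + g x) x\<bar> \<le> (SUP x\<in>{a..b}. \<bar>dX a b f x\<bar>) + (SUP x\<in>{a..b}. \<bar>dX a b g x\<bar>)"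
      using C1_add(2)[OF assms x] by linarith
  qed
  then show ?thesis unfolding C1norm_def by linarith
qed

lemma N_cmul:
  assumes "a < b" "Ck_on 1 {a..b} f"
  shows "C1norm a b (\<lambda>x. c * f x) \<le> \<bar>c\<bar> * C1norm a b f"
proof -
  have "C1norm a b (\<lambda>x. c * f x) \<le> \<bar>c\<bar> * (SUP x\<in>{a..b}. \<bar>f x\<bar>) + \<bar>c\<bar> * (SUP x\<in>{a..b}. \<bar>dX a b f x\<bar>)"
  proof (rule N_le)
    show "a \<le> b" using assms by simp
  next
    fix x assume x: "x \<in> {a..b}"
    have "\<bar>f x\<bar> \<le> (SUP x\<in>{a..b}. \<bar>f x\<bar>)" by (rule cSUP_upper[OF x cont_bdd[OF C1_cont[OF assms(2)]]])
    then show "\<bar>c * f x\<bar> \<le> \<bar>c\<bar> * (SUP x\<in>{a..b}. \<bar>f x\<bar>)" by (simp add: abs_mult mult_left_mono)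
    have "\<bar>dX a b f x\<bar> \<le> (SUP x\<in>{a..b}. \<bar>dX a b f x\<bar>)" by (rule cSUP_upper[OF x cont_bdd[OF C1_dX_cont[OF assms(2)]]])
    then show "\<bar>dX a b (\<lambda>x. c * f x) x\<bar> \<le> \<bar>c\<bar> * (SUP x\<in>{a..b}. \<bar>dX a b f x\<bar>)"
      using C1_cmul(2)[OF assms x] by (simp add: abs_mult mult_left_mono)
  qed
  then show ?thesis unfolding C1norm_def by (simp add: algebra_simps)
qed


lemma UL:
  fixes f :: "nat \<Rightarrow> real \<Rightarrow> real"
  assumes ab: "a < b" and C: "\<And>n. Ck_on 1 {a..b} (f n)"
    and uf: "\<And>e. e > 0 \<Longrightarrow> eventually (\<lambda>n. \<forall>x\<in>{a..b}. \<bar>f n x - F x\<bar> \<le> e) sequentially"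
    and ud: "\<And>e. e > 0 \<Longrightarrow> eventually (\<lambda>n. \<forall>x\<in>{a..b}. \<bar>dX a b (f n) x - G x\<bar> \<le> e) sequentially"
  shows "Ck_on 1 {a..b} F" "\<And>x. x \<in> {a..b} \<Longrightarrow> dX a b F x = G x"
proof -
  have lim: "(\<lambda>n. f n x) \<longlonglongrightarrow> F x" if "x \<in> {a..b}" for x
  proof (rule tendstoI)
    fix e :: real assume "e > 0"
    then have "e/2 > 0" by simp
    from uf[OF this] show "eventually (\<lambda>n. dist (f n x) (F x) < e) sequentially"
    proof eventually_elim
      case (elim n)
      then have "\<bar>f n x - F x\<bar> \<le> e/2" using that by auto
      then show ?case using \<open>e > 0\<close> by (simp add: dist_real_def)
    qed
  qed
  have derf: "((f n) has_derivative (\<lambda>h. dX a b (f n) x * h)) (at x within {a..b})" if "x \<in> {a..b}" for n x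
    using dX_has[OF C that] by (simp add: has_field_derivative_def)
  have nle: "\<forall>\<^sub>F n in sequentially. \<forall>x\<in>{a..b}. \<forall>h. norm (dX a b (f n) x * h - G x * h) \<le> e * norm h"
    if "e > 0" for e
    using ud[OF that]
  proof eventually_elim
    case (elim n)
    show ?case
    proof (intro ballI allI)
      fix x h assume "x \<in> {a..b}"
      then have "\<bar>dX a b (f n) x - G x\<bar> \<le> e" using elim by auto
      then have "\<bar>dX a b (f n) x - G x\<bar> * \<bar>h\<bar> \<le> e * \<bar>h\<bar>" by (simp add: mult_right_mono)
      then show "norm (dX a b (f n) x * h - G x * h) \<le> e * norm h"
        by (simp add: left_diff_distrib[symmetric] abs_mult)
    qed
  qed
  obtain g where g: "\<forall>x\<in>{a..b}. (\<lambda>n. f n x) \<longlonglongrightarrow> g x \<and> (g has_derivative (\<lambda>h. G x * h)) (at x within {a..b})"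
    using has_derivative_sequence[of "{a..b}" f "\<lambda>n x h. dX a b (f n) x * h" "\<lambda>x h. G x * h" a "F a"]
      derf nle ab lim[of a] by auto
  have Fg: "F x = g x" if "x \<in> {a..b}" for x
    using LIMSEQ_unique[OF lim[OF that]] g that by auto
  have derF: "(F has_real_derivative G x) (at x within {a..b})" if "x \<in> {a..b}" for x
  proof -
    have "(g has_real_derivative G x) (at x within {a..b})"
      using g that by (simp add: has_field_derivative_def)
    then show ?thesis
      by (rule has_field_derivative_transform_within[where d=1]) (use that Fg in auto)
  qed
  have contG: "continuous_on {a..b} G"
  proof (rule uniform_limit_theorem[where f="\<lambda>n. dX a b (f n)" and F=sequentially])
    show "\<forall>\<^sub>F n in sequentially. continuous_on {a..b} (dX a b (f n))"
      using C1_dX_cont[OF C] by simp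
    show "uniform_limit {a..b} (\<lambda>n. dX a b (f n)) G sequentially"
      unfolding uniform_limit_iff
    proof (intro allI impI)
      fix e :: real assume "e > 0"
      then have "e/2 > 0" by simp
      from ud[OF this] show "\<forall>\<^sub>F n in sequentially. \<forall>x\<in>{a..b}. dist (dX a b (f n) x) (G x) < e"
      proof eventually_elim
        case (elim n)
        show ?case
        proof
          fix x assume "x \<in> {a..b}"
          then have "\<bar>dX a b (f n) x - G x\<bar> \<le> e/2" using elim by auto
          then show "dist (dX a b (f n) x) (G x) < e" using \<open>e > 0\<close> by (simp add: dist_real_def)
        qed
      qed
    qed
  qed simp
  show "Ck_on 1 {a..b} F" "\<And>x. x \<in> {a..b} \<Longrightarrow> dX a b F x = G x"
    using C1_intro[OF ab derF contG] by auto
qed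


definition zx :: "nat set \<Rightarrow> (nat \<Rightarrow> 'b::zero) \<Rightarrow> nat \<Rightarrow> 'b" where
  "zx Z f n = (if n \<in> Z then f n else 0)"

lemma summable_on_Z_iff:
  fixes f :: "nat \<Rightarrow> real"
  shows "f summable_on Z \<longleftrightarrow> summable (\<lambda>n. \<bar>zx Z f n\<bar>)"
proof -
  have "f summable_on Z \<longleftrightarrow> zx Z f summable_on UNIV"
    unfolding zx_def by (intro summable_on_cong_neutral) auto
  also have "\<dots> \<longleftrightarrow> (\<lambda>n. \<bar>zx Z f n\<bar>) summable_on UNIV"
    using summable_on_iff_abs_summable_on_real by auto
  also have "\<dots> \<longleftrightarrow> summable (\<lambda>n. \<bar>zx Z f n\<bar>)"
    by (rule summable_on_UNIV_nonneg_real_iff) simp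
  finally show ?thesis .
qed

lemma infsum_Z:
  fixes f :: "nat \<Rightarrow> real"
  assumes "summable (\<lambda>n. \<bar>zx Z f n\<bar>)"
  shows "infsum f Z = suminf (zx Z f)"
proof -
  have s: "summable (zx Z f)" by (rule summable_rabs_cancel[OF assms])
  have h: "(zx Z f has_sum suminf (zx Z f)) UNIV"
  proof (rule norm_summable_imp_has_sum)
    show "summable (\<lambda>n. norm (zx Z f n))" using assms by simp
    show "zx Z f sums suminf (zx Z f)" using s by (rule summable_sums)
  qed
  have eq: "(f has_sum t) Z \<longleftrightarrow> (zx Z f has_sum t) UNIV" for t
    by (rule has_sum_cong_neutral) (auto simp: zx_def)
  have "(f has_sum suminf (zx Z f)) Z" using h eq by blast
  then show ?thesis by (simp add: has_sum_iff)
qed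

lemma infsum_Z_gen:
  fixes f :: "nat \<Rightarrow> real"
  shows "infsum f Z = (if summable (\<lambda>n. \<bar>zx Z f n\<bar>) then suminf (zx Z f) else 0)"
proof (cases "summable (\<lambda>n. \<bar>zx Z f n\<bar>)")
  case True
  then show ?thesis using infsum_Z by simp
next
  case False
  then have "\<not> f summable_on Z" using summable_on_Z_iff by blast
  then show ?thesis using False infsum_not_exists by simp
qed

lemma sum_sup_bound:
  assumes "sum_sup Z V S F < \<top>"
  shows "\<exists>M. (\<forall>n. 0 \<le> M n) \<and> summable M \<and> (\<forall>z\<in>Z. \<forall>e\<in>V. \<forall>x\<in>S. \<bar>F z e x\<bar> \<le> M z)"
proof -
  define G where "G z = (SUP e\<in>V. SUP x\<in>S. ennreal \<bar>F z e x\<bar>)" for z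
  have "sum_sup Z V S F = infsum G Z" unfolding sum_sup_def G_def by simp
  also have "\<dots> = infsum (zx Z G) UNIV"
    by (intro infsum_cong_neutral) (auto simp: zx_def)
  also have "\<dots> = suminf (zx Z G)"
  proof -
    have "zx Z G summable_on UNIV" by (rule nonneg_summable_on_complete) simp
    then show ?thesis using has_sum_imp_sums[OF has_sum_infsum[of "zx Z G" UNIV]] by (simp add: sums_iff)
  qed
  finally have fin: "suminf (zx Z G) < \<top>" using assms by simp
  have le: "zx Z G n \<le> suminf (zx Z G)" for n
  proof -
    have "sum (zx Z G) {n} \<le> suminf (zx Z G)"
      by (rule sum_le_suminf) auto
    then show ?thesis by simp
  qed
  define M where "M n = enn2real (zx Z G n)" for n
  have MG: "ennreal (M n) = zx Z G n" for n
  proof -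
    have "zx Z G n < \<top>" using le[of n] fin by (rule le_less_trans)
    then show ?thesis unfolding M_def by simp
  qed
  have M0: "0 \<le> M n" for n unfolding M_def by simp
  have "summable M"
    using fin MG M0 by (intro summable_suminf_not_top) auto
  moreover have "\<bar>F z e x\<bar> \<le> M z" if "z \<in> Z" "e \<in> V" "x \<in> S" for z e x
  proof -
    have "ennreal \<bar>F z e x\<bar> \<le> G z" unfolding G_def
      by (rule order_trans[OF SUP_upper[OF that(3)] SUP_upper[OF that(2)]])
    also have "\<dots> = ennreal (M z)" using MG[of z] that by (simp add: zx_def)
    finally show ?thesis using M0 ennreal_le_iff by blast
  qed
  ultimately show ?thesis using M0 by blast
qed


lemma tannery_unif:
  fixes f :: "nat \<Rightarrow> 'a \<Rightarrow> 'b \<Rightarrow> real"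
  assumes M: "summable M" "\<And>n. 0 \<le> M n"
    and bnd: "eventually (\<lambda>t. \<forall>n. \<forall>x\<in>S. \<bar>f n t x\<bar> \<le> M n) F"
    and conv: "\<And>n e. e > 0 \<Longrightarrow> eventually (\<lambda>t. \<forall>x\<in>S. \<bar>f n t x\<bar> \<le> e) F"
    and e: "e > 0"
  shows "eventually (\<lambda>t. \<forall>x\<in>S. \<bar>\<Sum>n. f n t x\<bar> \<le> e) F"
proof -
  obtain N where N: "norm (\<Sum>i. M (i + N)) < e/2"
    using suminf_exist_split[of "e/2" M] e M by auto
  have e2: "e / (2 * (real N + 1)) > 0" using e by simp
  have ev: "eventually (\<lambda>t. \<forall>n\<in>{..<N}. \<forall>x\<in>S. \<bar>f n t x\<bar> \<le> e / (2 * (real N + 1))) F"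
    by (intro eventually_ball_finite) (use conv[OF e2] in auto)
  show ?thesis
    using ev bnd
  proof eventually_elim
    case (elim t)
    show ?case
    proof
      fix x assume x: "x \<in> S"
      have sM: "summable (\<lambda>n. M (n + N))" using M(1) by (rule summable_ignore_initial_segment)
      have sf: "summable (\<lambda>n. f n t x)"
        by (rule summable_comparison_test[where g=M]) (use elim x M in auto)
      have "(\<Sum>n. f n t x) = (\<Sum>n. f (n + N) t x) + (\<Sum>n<N. f n t x)"
        by (rule suminf_split_initial_segment[OF sf])
      moreover have "\<bar>\<Sum>n. f (n + N) t x\<bar> \<le> (\<Sum>n. M (n + N))"
        using norm_suminf_le[of "\<lambda>n. f (n + N) t x" "\<lambda>n. M (n + N)"] sM elim x by auto
      moreover have "\<bar>\<Sum>n<N. f n t x\<bar> \<le> (\<Sum>n<N. e / (2 * (real N + 1)))"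
        using elim x by (intro order_trans[OF sum_abs] sum_mono) auto
      moreover have "(\<Sum>n<N. e / (2 * (real N + 1))) \<le> e/2"
        using e by (simp add: field_simps)
      moreover have "(\<Sum>n. M (n + N)) < e/2" using N by simp
      ultimately show "\<bar>\<Sum>n. f n t x\<bar> \<le> e" by linarith
    qed
  qed
qed


lemma mvt0:
  fixes f f' :: "real \<Rightarrow> real"
  assumes "t \<noteq> 0" "\<And>s. \<bar>s\<bar> \<le> \<bar>t\<bar> \<Longrightarrow> (f has_real_derivative f' s) (at s)"
  shows "\<exists>s. \<bar>s\<bar> \<le> \<bar>t\<bar> \<and> f t - f 0 = t * f' s"
proof (cases "t > 0")
  case True
  have "\<exists>z>0. z < t \<and> f t - f 0 = (t - 0) * f' z"
    by (rule MVT2[OF True]) (use assms(2) True in auto)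
  then obtain z where "z > 0" "z < t" "f t - f 0 = (t - 0) * f' z" by blast
  then have "\<bar>z\<bar> \<le> \<bar>t\<bar>" "f t - f 0 = t * f' z" by auto
  then show ?thesis by blast
next
  case False
  then have t: "t < 0" using assms(1) by simp
  have "\<exists>z>t. z < 0 \<and> f 0 - f t = (0 - t) * f' z"
    by (rule MVT2[OF t]) (use assms(2) t in auto)
  then obtain z where "z > t" "z < 0" "f 0 - f t = (0 - t) * f' z" by blast
  then have "\<bar>z\<bar> \<le> \<bar>t\<bar>" "f t - f 0 = t * f' z" by (auto simp: algebra_simps)
  then show ?thesis by blast
qed

lemma emeasure_lborel_Icc_pos: "(p::real) < q \<Longrightarrow> emeasure lborel {p..q} = ennreal (q - p)"
  by simp

lemma AE_cont_eq:
  fixes f g :: "real \<Rightarrow> real"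
  assumes ab: "a < b" and cf: "continuous_on {a..b} f" and cg: "continuous_on {a..b} g"
    and ae: "AE x in mX a b. f x = g x"
  shows "\<forall>x\<in>{a..b}. f x = g x"
proof (rule ccontr)
  assume "\<not> (\<forall>x\<in>{a..b}. f x = g x)"
  then obtain x0 where x0: "x0 \<in> {a..b}" "f x0 \<noteq> g x0" by blast
  have ae2: "AE x in lborel. x \<in> {a..b} \<longrightarrow> f x = g x"
    using ae ab unfolding mX_def by (subst (asm) AE_uniform_measure) auto
  define h where "h x = f x - g x" for x
  have ch: "continuous_on {a..b} h" unfolding h_def using cf cg by (intro continuous_intros)
  have hx0: "\<bar>h x0\<bar> > 0" using x0 unfolding h_def by simp
  obtain d where d: "d > 0" "\<forall>y\<in>{a..b}. dist y x0 < d \<longrightarrow> dist (h y) (h x0) < \<bar>h x0\<bar>"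
    using ch x0(1) hx0 unfolding continuous_on_iff by blast
  define p where "p = max a (x0 - d/2)"
  define q where "q = min b (x0 + d/2)"
  have pq: "p < q"
  proof (cases "x0 > a")
    case True then show ?thesis using d x0 unfolding p_def q_def by auto
  next
    case False then have "x0 = a" using x0 by auto
    then show ?thesis using d ab unfolding p_def q_def by auto
  qed
  have sub: "{p..q} \<subseteq> {a..b}" unfolding p_def q_def by auto
  have ne: "f y \<noteq> g y" if "y \<in> {p..q}" for y
  proof -
    have "dist y x0 < d" using that d unfolding p_def q_def dist_real_def by auto
    then have "dist (h y) (h x0) < \<bar>h x0\<bar>" using d sub that by auto
    then have "h y \<noteq> 0" by (auto simp: dist_real_def)
    then show ?thesis unfolding h_def by simp
  qed
  have "AE x in lborel. x \<notin> {p..q}"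
    using ae2 by eventually_elim (use ne sub in blast)
  then have "emeasure lborel {p..q} = 0"
    by (subst (asm) AE_iff_measurable[where N="{p..q}"]) auto
  then show False using pq by simp
qed

definition trunc :: "real \<Rightarrow> real \<Rightarrow> (real \<Rightarrow> real) \<Rightarrow> real \<Rightarrow> real" where
  "trunc a b f x = (if x \<in> {a..b} then f x else 0)"

lemma prob_mX: "a < b \<Longrightarrow> prob_space (mX a b)"
  unfolding mX_def by (intro prob_space_uniform_measure) auto

lemma sets_mX: "sets (mX a b) = sets borel"
  unfolding mX_def by simp

lemma AE_mX: "a < b \<Longrightarrow> AE x in mX a b. x \<in> {a..b}"
  unfolding mX_def by (intro AE_uniform_measureI) auto

lemma trunc_meas:
  assumes "continuous_on {a..b} f"
  shows "trunc a b f \<in> borel_measurable (mX a b)"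
proof -
  have "(\<lambda>x. indicator {a..b} x *\<^sub>R f x) \<in> borel_measurable borel"
    by (rule borel_measurable_continuous_on_indicator) (use assms in auto)
  moreover have "(\<lambda>x. indicator {a..b} x *\<^sub>R f x) = trunc a b f"
    by (auto simp: trunc_def indicator_def)
  ultimately show ?thesis using measurable_cong_sets[OF sets_mX refl] by auto
qed

lemma cont_bound:
  assumes "continuous_on {a..b} (f::real \<Rightarrow> real)"
  shows "\<exists>B\<ge>0. \<forall>x\<in>{a..b}. \<bar>f x\<bar> \<le> B"
proof -
  have "compact (f ` {a..b})" by (intro compact_continuous_image assms) auto
  then obtain B where "\<forall>y\<in>f ` {a..b}. norm y \<le> B" using compact_imp_bounded bounded_iff by metis
  then show ?thesis by (intro exI[of _ "max B 0"]) auto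
qed

lemma trunc_int:
  assumes "a < b" "continuous_on {a..b} f"
  shows "integrable (mX a b) (trunc a b f)"
proof -
  interpret prob_space "mX a b" using prob_mX[OF assms(1)] .
  obtain B where B: "B \<ge> 0" "\<forall>x\<in>{a..b}. \<bar>f x\<bar> \<le> B" using cont_bound[OF assms(2)] by blast
  show ?thesis
  proof (rule integrable_const_bound[where B=B])
    show "AE x in mX a b. norm (trunc a b f x) \<le> B" using B by (auto simp: trunc_def)
    show "trunc a b f \<in> borel_measurable (mX a b)" by (rule trunc_meas[OF assms(2)])
  qed
qed

lemma trunc_bound:
  assumes "a < b" "continuous_on {a..b} f" "\<And>x. x \<in> {a..b} \<Longrightarrow> \<bar>f x\<bar> \<le> B"
  shows "\<bar>integral\<^sup>L (mX a b) (trunc a b f)\<bar> \<le> B"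
proof -
  interpret prob_space "mX a b" using prob_mX[OF assms(1)] .
  have B0: "0 \<le> B" using assms(3)[of a] assms(1) by force
  have "\<bar>integral\<^sup>L (mX a b) (trunc a b f)\<bar> \<le> integral\<^sup>L (mX a b) (\<lambda>x. \<bar>trunc a b f x\<bar>)"
    using integral_abs_bound by blast
  also have "\<dots> \<le> integral\<^sup>L (mX a b) (\<lambda>x. B)"
  proof (rule integral_mono)
    show "integrable (mX a b) (\<lambda>x. \<bar>trunc a b f x\<bar>)" using integrable_abs[OF trunc_int[OF assms(1,2)]] .
    show "integrable (mX a b) (\<lambda>x. B)" by simp
    show "\<bar>trunc a b f x\<bar> \<le> B" for x using assms(3) B0 by (auto simp: trunc_def)
  qed
  also have "\<dots> = B" by (simp add: prob_space)
  finally show ?thesis .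
qed

lemma trunc_lin:
  assumes "a < b" "continuous_on {a..b} f" "continuous_on {a..b} g"
  shows "integral\<^sup>L (mX a b) (trunc a b (\<lambda>x. c * f x + d * g x)) =
     c * integral\<^sup>L (mX a b) (trunc a b f) + d * integral\<^sup>L (mX a b) (trunc a b g)"
proof -
  have "trunc a b (\<lambda>x. c * f x + d * g x) = (\<lambda>x. c * trunc a b f x + d * trunc a b g x)"
    by (auto simp: trunc_def)
  then show ?thesis using trunc_int[OF assms(1,2)] trunc_int[OF assms(1,3)] by simp
qed

lemma trunc_cong:
  "(\<And>x. x \<in> {a..b} \<Longrightarrow> f x = g x) \<Longrightarrow> trunc a b f = trunc a b g"
  by (auto simp: trunc_def)

lemma trunc_integral_eq:
  assumes "a < b" "integrable (mX a b) f" "continuous_on {a..b} f"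
  shows "integral\<^sup>L (mX a b) (trunc a b f) = integral\<^sup>L (mX a b) f"
  using AE_mX[OF assms(1)] trunc_meas[OF assms(3)] borel_measurable_integrable[OF assms(2)]
  by (intro integral_cong_AE) (auto simp: trunc_def elim: eventually_mono)

lemma trunc_trunc: "trunc a b (trunc a b f) = trunc a b f"
  by (auto simp: trunc_def)


locale setting =
  fixes a b :: real and M :: "'w measure" and Z :: "nat set"
    and I :: "nat \<Rightarrow> 'w \<Rightarrow> real set" and T :: "'w \<Rightarrow> real \<Rightarrow> real"
    and g :: "nat \<Rightarrow> 'w \<Rightarrow> real \<Rightarrow> real"
    and P :: "real \<Rightarrow> 'w measure" and V :: "real set"
    and h :: "real \<Rightarrow> real \<Rightarrow> real"
  assumes sys: "branch_system a b Z I T g"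
    and V: "open V" "0 \<in> V"
    and P: "\<And>\<epsilon>. \<epsilon> \<in> V \<Longrightarrow> prob_space (P \<epsilon>) \<and> sets (P \<epsilon>) = sets M"
    
    and gap: "uniform_spectral_gap_C1 a b V (\<lambda>\<epsilon>. LP a b Z I g (P \<epsilon>))"
    and stat: "\<And>\<epsilon>. \<epsilon> \<in> V \<Longrightarrow>
        stationary_density a b (LP a b Z I g (P \<epsilon>)) (h \<epsilon>) \<and> Ck_on 2 {a..b} (h \<epsilon>) \<and>
        (\<forall>h'. stationary_density a b (LP a b Z I g (P \<epsilon>)) h' \<longrightarrow>
               (AE x in mX a b. h' x = h \<epsilon> x))"
    
    and B1_diff: "\<And>z \<epsilon> x. z \<in> Z \<Longrightarrow> \<epsilon> \<in> V \<Longrightarrow> x \<in> {a..b} \<Longrightarrow>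
        (\<lambda>e. psi a b I g P (h 0) z e x) differentiable (at \<epsilon>) \<and>
        (\<lambda>y. psi a b I g P (h 0) z \<epsilon> y) differentiable (at x within {a..b}) \<and>
        (\<lambda>y. d_eps (psi a b I g P (h 0) z) \<epsilon> y) differentiable (at x within {a..b}) \<and>
        (\<lambda>e. d_x a b (psi a b I g P (h 0) z) e x) differentiable (at \<epsilon>)"
    and B1_cont: "\<And>z. z \<in> Z \<Longrightarrow>
        continuous_on (V \<times> {a..b}) (\<lambda>(e, y). d_eps (psi a b I g P (h 0) z) e y) \<and>
        continuous_on (V \<times> {a..b}) (\<lambda>(e, y). d_x a b (psi a b I g P (h 0) z) e y) \<and>
        continuous_on (V \<times> {a..b}) (\<lambda>(e, y). d_x a b (d_eps (psi a b I g P (h 0) z)) e y) \<and>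
        continuous_on (V \<times> {a..b}) (\<lambda>(e, y). d_eps (d_x a b (psi a b I g P (h 0) z)) e y)"
    and B1_sum: "sum_sup Z V {a..b} (\<lambda>z. d_eps (psi a b I g P (h 0) z)) < \<top>"
                "sum_sup Z V {a..b} (\<lambda>z. d_eps (d_x a b (psi a b I g P (h 0) z))) < \<top>"
    
    and B2: "\<And>\<Phi>. Ck_on 1 {a..b} \<Phi> \<Longrightarrow>
        (\<forall>z\<in>Z. \<forall>\<epsilon>\<in>V. \<forall>x\<in>{a..b}.
            integrable (P \<epsilon>) (\<lambda>\<omega>. bterm a b I g \<Phi> z \<omega> x) \<and>
            (\<lambda>y. psi a b I g P \<Phi> z \<epsilon> y) differentiable (at x within {a..b})) \<and>
        (\<forall>z\<in>Z. continuous_on (V \<times> {a..b}) (\<lambda>(e, y). psi a b I g P \<Phi> z e y) \<and>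
                continuous_on (V \<times> {a..b}) (\<lambda>(e, y). d_x a b (psi a b I g P \<Phi> z) e y)) \<and>
        sum_sup Z V {a..b} (psi a b I g P \<Phi>) < \<top> \<and>
        sum_sup Z V {a..b} (\<lambda>z. d_x a b (psi a b I g P \<Phi> z)) < \<top>"
begin

declare Ck_on.simps [simp del]

abbreviation "L e \<equiv> LP a b Z I g (P e)"
abbreviation "C1 f \<equiv> Ck_on 1 {a..b} f"
abbreviation "N f \<equiv> C1norm a b f"
abbreviation "Iv f \<equiv> integral\<^sup>L (mX a b) (trunc a b f)"

lemma ab: "a < b" using sys unfolding branch_system_def by auto

lemma sys_z:
  assumes "z \<in> Z" "I z \<omega> \<noteq> {}"
  shows "(\<exists>c d. a \<le> c \<and> c < d \<and> d \<le> b \<and> I z \<omega> = {c<..<d}) \<and> g z \<omega> ` {a..b} \<subseteq> closure (I z \<omega>)"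
  using sys unfolding branch_system_def
  apply (elim conjE)
  apply (drule spec[of _ \<omega>])
  apply (elim conjE)
  apply (drule bspec[OF _ assms(1)])
  using assms(2) by (elim disjE conjE) simp_all

lemma g_in:
  assumes "z \<in> Z" "I z \<omega> \<noteq> {}" "x \<in> {a..b}"
  shows "g z \<omega> x \<in> {a..b}"
proof -
  obtain c d where cd: "a \<le> c" "c < d" "d \<le> b" "I z \<omega> = {c<..<d}"
    using sys_z[OF assms(1,2)] by blast
  have gi: "g z \<omega> ` {a..b} \<subseteq> closure (I z \<omega>)" using sys_z[OF assms(1,2)] by blast
  have "closure (I z \<omega>) = {c..d}" using cd by simp
  then have "g z \<omega> x \<in> {c..d}" using gi assms(3) by blast
  then show ?thesis using cd by auto
qed

lemma L_cong:
  assumes "\<And>y. y \<in> {a..b} \<Longrightarrow> \<phi> y = \<psi> y" "x \<in> {a..b}"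
  shows "L e \<phi> x = L e \<psi> x"
proof -
  have "bterm a b I g \<phi> z \<omega> x = bterm a b I g \<psi> z \<omega> x" if "z \<in> Z" for z \<omega>
    using g_in[OF that _ assms(2)] assms(1) unfolding bterm_def by auto
  then have "LT a b Z I g \<omega> \<phi> x = LT a b Z I g \<omega> \<psi> x" for \<omega>
    unfolding LT_def by (intro infsum_cong) auto
  then show ?thesis unfolding LP_def by simp
qed

lemma Lpow_cong:
  assumes "\<And>y. y \<in> {a..b} \<Longrightarrow> \<phi> y = \<psi> y"
  shows "\<forall>x\<in>{a..b}. (L e ^^ n) \<phi> x = (L e ^^ n) \<psi> x"
proof (induction n)
  case 0 then show ?case using assms by simp
next
  case (Suc n)
  show ?case
  proof
    fix x assume "x \<in> {a..b}"
    then have "L e ((L e ^^ n) \<phi>) x = L e ((L e ^^ n) \<psi>) x" using Suc.IH by (intro L_cong) auto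
    then show "(L e ^^ Suc n) \<phi> x = (L e ^^ Suc n) \<psi> x" by simp
  qed
qed

lemma Lmap: "e \<in> V \<Longrightarrow> C1 \<phi> \<Longrightarrow> C1 (L e \<phi>)"
  using conjunct1[OF gap[unfolded uniform_spectral_gap_C1_def]] by blast

lemma Lpow_C1: "e \<in> V \<Longrightarrow> C1 \<phi> \<Longrightarrow> C1 ((L e ^^ n) \<phi>)"
proof (induction n)
  case 0 then show ?case by simp
next
  case (Suc n)
  have "(L e ^^ Suc n) \<phi> = L e ((L e ^^ n) \<phi>)" by simp
  then show ?case using Lmap[OF Suc.prems(1) Suc.IH[OF Suc.prems]] by simp
qed

lemma gap_consts: obtains \<theta> C where "0 < \<theta>" "\<theta> < 1" "0 < C"
  "\<And>e n \<phi>. e \<in> V \<Longrightarrow> n \<ge> 1 \<Longrightarrow> C1 \<phi> \<Longrightarrow> Iv \<phi> = 0 \<Longrightarrow> N ((L e ^^ n) \<phi>) \<le> C * \<theta> ^ n * N \<phi>"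
proof -
  obtain \<theta> C where tc: "0 < \<theta>" "\<theta> < 1" "0 < C"
    and G: "\<forall>\<epsilon>\<in>V. \<forall>n\<ge>1. \<forall>\<phi>. C1 \<phi> \<and> integral\<^sup>L (mX a b) \<phi> = 0 \<longrightarrow>
            N ((L \<epsilon> ^^ n) \<phi>) \<le> C * \<theta> ^ n * N \<phi>"
    using gap unfolding uniform_spectral_gap_C1_def by blast
  have "N ((L e ^^ n) \<phi>) \<le> C * \<theta> ^ n * N \<phi>"
    if "e \<in> V" "n \<ge> 1" "C1 \<phi>" "Iv \<phi> = 0" for e n \<phi>
  proof -
    have eq: "\<And>y. y \<in> {a..b} \<Longrightarrow> trunc a b \<phi> y = \<phi> y" by (simp add: trunc_def)
    have c: "C1 (trunc a b \<phi>)" using C1_cong[OF that(3)] eq by metis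
    have "integral\<^sup>L (mX a b) (trunc a b \<phi>) = 0" using that(4) .
    then have "N ((L e ^^ n) (trunc a b \<phi>)) \<le> C * \<theta> ^ n * N (trunc a b \<phi>)"
      using G that(1,2) c by simp
    moreover have "N ((L e ^^ n) (trunc a b \<phi>)) = N ((L e ^^ n) \<phi>)"
      using Lpow_cong[OF eq] by (intro N_cong) auto
    moreover have "N (trunc a b \<phi>) = N \<phi>" using eq by (intro N_cong) auto
    ultimately show ?thesis by simp
  qed
  then show ?thesis using that tc by blast
qed

lemma Pe: "e \<in> V \<Longrightarrow> prob_space (P e)" using P by blast

lemma B2_int: "C1 \<phi> \<Longrightarrow> z \<in> Z \<Longrightarrow> e \<in> V \<Longrightarrow> x \<in> {a..b} \<Longrightarrow>
    integrable (P e) (\<lambda>\<omega>. bterm a b I g \<phi> z \<omega> x)"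
  using conjunct1[OF B2] by simp
lemma B2_diff: "C1 \<phi> \<Longrightarrow> z \<in> Z \<Longrightarrow> e \<in> V \<Longrightarrow> x \<in> {a..b} \<Longrightarrow>
    (\<lambda>y. psi a b I g P \<phi> z e y) differentiable (at x within {a..b})"
  using conjunct1[OF B2] by simp
lemma B2_cont: "C1 \<phi> \<Longrightarrow> z \<in> Z \<Longrightarrow>
    continuous_on (V \<times> {a..b}) (\<lambda>(e, y). psi a b I g P \<phi> z e y) \<and>
    continuous_on (V \<times> {a..b}) (\<lambda>(e, y). d_x a b (psi a b I g P \<phi> z) e y)"
  using conjunct1[OF conjunct2[OF B2]] by simp
lemma B2_sum: "C1 \<phi> \<Longrightarrow> sum_sup Z V {a..b} (psi a b I g P \<phi>) < \<top> \<and>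
        sum_sup Z V {a..b} (\<lambda>z. d_x a b (psi a b I g P \<phi> z)) < \<top>"
  using conjunct2[OF conjunct2[OF B2]] by simp

lemma bterm_one_nonneg: "0 \<le> bterm a b I g (\<lambda>_. 1) z \<omega> x"
  unfolding bterm_def by auto

lemma bterm_bound:
  assumes "z \<in> Z" "x \<in> {a..b}" "\<And>y. y \<in> {a..b} \<Longrightarrow> \<bar>\<phi> y\<bar> \<le> K"
  shows "\<bar>bterm a b I g \<phi> z \<omega> x\<bar> \<le> K * bterm a b I g (\<lambda>_. 1) z \<omega> x"
proof (cases "I z \<omega> = {}")
  case True then show ?thesis unfolding bterm_def by simp
next
  case False
  then have "\<bar>\<phi> (g z \<omega> x)\<bar> \<le> K" using assms g_in by blast
  then show ?thesis using False unfolding bterm_def by (simp add: abs_mult mult_right_mono)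
qed

lemma bterm_lin:
  "bterm a b I g (\<lambda>y. c * \<phi> y + d * \<psi> y) z \<omega> x = c * bterm a b I g \<phi> z \<omega> x + d * bterm a b I g \<psi> z \<omega> x"
  unfolding bterm_def by (simp add: algebra_simps)

end

context setting begin

lemma M1_ex: obtains M1 where "\<And>n. 0 \<le> M1 n" "summable M1"
  "\<And>z e x. z \<in> Z \<Longrightarrow> e \<in> V \<Longrightarrow> x \<in> {a..b} \<Longrightarrow> \<bar>psi a b I g P (\<lambda>_. 1) z e x\<bar> \<le> M1 z"
  using sum_sup_bound[OF conjunct1[OF B2_sum[OF C1_const[OF ab]]]] by blast

lemma LP_eq:
  assumes e: "e \<in> V" and c: "C1 \<phi>" and x: "x \<in> {a..b}"
  shows "L e \<phi> x = suminf (zx Z (\<lambda>z. psi a b I g P \<phi> z e x))"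
    "summable (\<lambda>n. \<bar>zx Z (\<lambda>z. psi a b I g P \<phi> z e x) n\<bar>)"
proof -
  define Q where "Q = P e"
  interpret Q: prob_space Q unfolding Q_def using Pe[OF e] .
  obtain M1 where M1: "\<And>n. 0 \<le> M1 n" "summable M1"
    "\<And>z e x. z \<in> Z \<Longrightarrow> e \<in> V \<Longrightarrow> x \<in> {a..b} \<Longrightarrow> \<bar>psi a b I g P (\<lambda>_. 1) z e x\<bar> \<le> M1 z"
    using M1_ex by blast
  obtain K where K: "K \<ge> 0" "\<And>y. y \<in> {a..b} \<Longrightarrow> \<bar>\<phi> y\<bar> \<le> K"
    using cont_bound[OF C1_cont[OF c]] by blast
  define f where "f n \<omega> = zx Z (\<lambda>z. bterm a b I g \<phi> z \<omega> x) n" for n \<omega>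
  define u where "u n \<omega> = zx Z (\<lambda>z. bterm a b I g (\<lambda>_. 1) z \<omega> x) n" for n \<omega>
  have c1: "C1 (\<lambda>_. 1::real)" by (rule C1_const[OF ab])
  have fi: "integrable Q (f n)" for n
    unfolding f_def zx_def Q_def using B2_int[OF c _ e x] by (cases "n \<in> Z") auto
  have ui: "integrable Q (u n)" for n
    unfolding u_def zx_def Q_def using B2_int[OF c1 _ e x] by (cases "n \<in> Z") auto
  have u0: "0 \<le> u n \<omega>" for n \<omega> unfolding u_def zx_def using bterm_one_nonneg by auto
  have fu: "\<bar>f n \<omega>\<bar> \<le> K * u n \<omega>" for n \<omega>
    unfolding f_def u_def zx_def using bterm_bound[OF _ x K(2)] by auto
  have fm[measurable]: "f n \<in> borel_measurable Q" for n using fi by auto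
  have um[measurable]: "u n \<in> borel_measurable Q" for n using ui by auto
  have intu: "integral\<^sup>L Q (u n) = zx Z (\<lambda>z. psi a b I g P (\<lambda>_. 1) z e x) n" for n
    unfolding u_def zx_def psi_def Q_def by auto
  have intu_le: "integral\<^sup>L Q (u n) \<le> M1 n" for n
    using M1(3)[of n e x] M1(1)[of n] e x unfolding intu zx_def by auto
  have su: "summable (\<lambda>n. integral\<^sup>L Q (u n))"
    by (rule summable_comparison_test[OF _ M1(2)]) (use intu_le u0 in \<open>auto intro!: exI[of _ 0] integral_nonneg_AE\<close>)
  have "(\<integral>\<^sup>+\<omega>. (\<Sum>n. ennreal (u n \<omega>)) \<partial>Q) = (\<Sum>n. \<integral>\<^sup>+\<omega>. ennreal (u n \<omega>) \<partial>Q)"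
    by (rule nn_integral_suminf) measurable
  also have "\<dots> = (\<Sum>n. ennreal (integral\<^sup>L Q (u n)))"
    using nn_integral_eq_integral[OF ui] u0 by simp
  also have "\<dots> = ennreal (\<Sum>n. integral\<^sup>L Q (u n))"
    using su u0 by (intro suminf_ennreal2) (auto intro: integral_nonneg_AE)
  finally have "(\<integral>\<^sup>+\<omega>. (\<Sum>n. ennreal (u n \<omega>)) \<partial>Q) \<noteq> \<infinity>" by simp
  then have "AE \<omega> in Q. (\<Sum>n. ennreal (u n \<omega>)) \<noteq> \<infinity>"
    by (intro nn_integral_noteq_infinite) measurable
  then have aeu: "AE \<omega> in Q. summable (\<lambda>n. u n \<omega>)"
    by eventually_elim (use u0 in \<open>auto intro: summable_suminf_not_top\<close>)
  have aef: "AE \<omega> in Q. summable (\<lambda>n. norm (f n \<omega>))"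
    using aeu
  proof eventually_elim
    case (elim \<omega>)
    then have "summable (\<lambda>n. K * u n \<omega>)" by (rule summable_mult)
    have "\<forall>n\<ge>0. norm (norm (f n \<omega>)) \<le> K * u n \<omega>" using fu by simp
    then show ?case using summable_comparison_test[where g="\<lambda>n. K * u n \<omega>" and f="\<lambda>n. norm (f n \<omega>)"]
      \<open>summable (\<lambda>n. K * u n \<omega>)\<close> by blast
  qed
  have intf_le: "integral\<^sup>L Q (\<lambda>\<omega>. norm (f n \<omega>)) \<le> K * integral\<^sup>L Q (u n)" for n
  proof -
    have "integral\<^sup>L Q (\<lambda>\<omega>. norm (f n \<omega>)) \<le> integral\<^sup>L Q (\<lambda>\<omega>. K * u n \<omega>)"
      using fu fi ui by (intro integral_mono) auto
    then show ?thesis by simp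
  qed
  have sf: "summable (\<lambda>n. integral\<^sup>L Q (\<lambda>\<omega>. norm (f n \<omega>)))"
  proof (rule summable_comparison_test[where g="\<lambda>n. K * integral\<^sup>L Q (u n)"])
    show "\<exists>N. \<forall>n\<ge>N. norm (integral\<^sup>L Q (\<lambda>\<omega>. norm (f n \<omega>))) \<le> K * integral\<^sup>L Q (u n)"
      using intf_le by (auto intro!: exI[of _ 0])
    show "summable (\<lambda>n. K * integral\<^sup>L Q (u n))" using su by (rule summable_mult)
  qed
  have intf: "integral\<^sup>L Q (f n) = zx Z (\<lambda>z. psi a b I g P \<phi> z e x) n" for n
    unfolding f_def zx_def psi_def Q_def by auto
  have key: "integral\<^sup>L Q (\<lambda>\<omega>. \<Sum>n. f n \<omega>) = (\<Sum>n. integral\<^sup>L Q (f n))"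
    by (rule integral_suminf[OF fi aef sf])
  have LT_eq: "LT a b Z I g \<omega> \<phi> x = (if (\<Sum>n. ennreal (norm (f n \<omega>))) \<noteq> \<top> then (\<Sum>n. f n \<omega>) else 0)" for \<omega>
  proof -
    have s_iff: "summable (\<lambda>n. \<bar>f n \<omega>\<bar>) \<longleftrightarrow> (\<Sum>n. ennreal (norm (f n \<omega>))) \<noteq> \<top>"
    proof
      assume "summable (\<lambda>n. \<bar>f n \<omega>\<bar>)"
      then have "(\<Sum>n. ennreal \<bar>f n \<omega>\<bar>) \<noteq> \<top>" by (rule ennreal_suminf_neq_top) simp
      then show "(\<Sum>n. ennreal (norm (f n \<omega>))) \<noteq> \<top>" by simp
    next
      assume "(\<Sum>n. ennreal (norm (f n \<omega>))) \<noteq> \<top>"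
      then have "(\<Sum>n. ennreal \<bar>f n \<omega>\<bar>) \<noteq> \<top>" by simp
      then show "summable (\<lambda>n. \<bar>f n \<omega>\<bar>)" by (rule summable_suminf_not_top[rotated]) simp
    qed
    have "LT a b Z I g \<omega> \<phi> x = infsum (\<lambda>z. bterm a b I g \<phi> z \<omega> x) Z" by (simp add: LT_def)
    also have "\<dots> = (if summable (\<lambda>n. \<bar>zx Z (\<lambda>z. bterm a b I g \<phi> z \<omega> x) n\<bar>)
        then suminf (zx Z (\<lambda>z. bterm a b I g \<phi> z \<omega> x)) else 0)" by (rule infsum_Z_gen)
    also have "\<dots> = (if summable (\<lambda>n. \<bar>f n \<omega>\<bar>) then (\<Sum>n. f n \<omega>) else 0)"
      unfolding f_def by simp
    also have "\<dots> = (if (\<Sum>n. ennreal (norm (f n \<omega>))) \<noteq> \<top> then (\<Sum>n. f n \<omega>) else 0)"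
      using s_iff by simp
    finally show ?thesis .
  qed
  have "L e \<phi> x = integral\<^sup>L Q (\<lambda>\<omega>. LT a b Z I g \<omega> \<phi> x)" unfolding LP_def Q_def ..
  also have "\<dots> = integral\<^sup>L Q (\<lambda>\<omega>. \<Sum>n. f n \<omega>)"
  proof (rule integral_cong_AE)
    show "(\<lambda>\<omega>. LT a b Z I g \<omega> \<phi> x) \<in> borel_measurable Q" unfolding LT_eq by measurable
    show "(\<lambda>\<omega>. \<Sum>n. f n \<omega>) \<in> borel_measurable Q" by measurable
    show "AE \<omega> in Q. LT a b Z I g \<omega> \<phi> x = (\<Sum>n. f n \<omega>)"
      using aef by eventually_elim (simp add: LT_eq ennreal_suminf_neq_top)
  qed
  also have "\<dots> = suminf (zx Z (\<lambda>z. psi a b I g P \<phi> z e x))" unfolding key intf ..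
  finally show "L e \<phi> x = suminf (zx Z (\<lambda>z. psi a b I g P \<phi> z e x))" .
  show "summable (\<lambda>n. \<bar>zx Z (\<lambda>z. psi a b I g P \<phi> z e x) n\<bar>)"
  proof (rule summable_comparison_test[OF _ sf])
    show "\<exists>N. \<forall>n\<ge>N. norm \<bar>zx Z (\<lambda>z. psi a b I g P \<phi> z e x) n\<bar> \<le> integral\<^sup>L Q (\<lambda>\<omega>. norm (f n \<omega>))"
      unfolding intf[symmetric] using integral_norm_bound by (auto intro!: exI[of _ 0])
  qed
qed

end

lemma C2_C1: "Ck_on 2 S f \<Longrightarrow> Ck_on 1 S f"
proof -
  assume h: "Ck_on 2 S f"
  have e: "Ck_on 2 S f = ((\<forall>x\<in>S. f differentiable (at x within S)) \<and> Ck_on 1 S (\<lambda>x. vector_derivative f (at x within S)))"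
    using Ck_on.simps(2)[of 1 S f] unfolding Suc_1 .
  have d: "\<forall>x\<in>S. f differentiable (at x within S)"
    and c: "Ck_on 1 S (\<lambda>x. vector_derivative f (at x within S))"
    using h unfolding e by blast+
  have "continuous_on S (\<lambda>x. vector_derivative f (at x within S))" using C1_cont[OF c] .
  then show ?thesis using d unfolding C1_iff by simp
qed

lemma unif_cont_pt:
  fixes F :: "real \<Rightarrow> real \<Rightarrow> real"
  assumes cont: "continuous_on (V \<times> {a..b}) (\<lambda>(e, y). F e y)" and r: "r > 0" "cball 0 r \<subseteq> V"
    and ep: "ep > 0"
  shows "\<exists>d>0. \<forall>t x. \<bar>t\<bar> < d \<longrightarrow> \<bar>t\<bar> \<le> r \<longrightarrow> x \<in> {a..b} \<longrightarrow> \<bar>F t x - F 0 x\<bar> \<le> ep"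
proof -
  have "continuous_on (cball 0 r \<times> {a..b}) (\<lambda>(e, y). F e y)"
    by (rule continuous_on_subset[OF cont]) (use r in auto)
  then have "uniformly_continuous_on (cball 0 r \<times> {a..b}) (\<lambda>(e, y). F e y)"
    by (intro compact_uniformly_continuous) (auto intro: compact_Times)
  then obtain d where d: "d > 0" "\<forall>p\<in>cball 0 r \<times> {a..b}. \<forall>q\<in>cball 0 r \<times> {a..b}. dist q p < d \<longrightarrow>
      dist ((\<lambda>(e, y). F e y) q) ((\<lambda>(e, y). F e y) p) < ep"
    unfolding uniformly_continuous_on_def using ep by blast
  have "\<bar>F t x - F 0 x\<bar> \<le> ep" if "\<bar>t\<bar> < d" "\<bar>t\<bar> \<le> r" "x \<in> {a..b}" for t x
  proof -
    have "(t, x) \<in> cball 0 r \<times> {a..b}" "(0, x) \<in> cball 0 r \<times> {a..b}" using that r by auto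
    moreover have "dist (t, x) (0, x) < d" using that by (simp add: dist_Pair_Pair dist_real_def)
    ultimately have "dist (F t x) (F 0 x) < ep" using d(2) by fastforce
    then show ?thesis by (simp add: dist_real_def)
  qed
  then show ?thesis using d(1) by blast
qed

lemma tail_unif:
  fixes f :: "nat \<Rightarrow> 'a \<Rightarrow> real"
  assumes M: "summable M" and bnd: "\<And>n y. y \<in> S \<Longrightarrow> \<bar>f n y\<bar> \<le> M n" and ep: "ep > 0"
  shows "eventually (\<lambda>m. \<forall>y\<in>S. \<bar>(\<Sum>n<m. f n y) - (\<Sum>n. f n y)\<bar> \<le> ep) sequentially"
proof -
  obtain N where N: "\<forall>m\<ge>N. norm (\<Sum>i. M (i + m)) < ep" using suminf_exist_split[OF ep M] by blast
  show ?thesis unfolding eventually_sequentially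
  proof (intro exI[of _ N] allI impI ballI)
    fix m y assume m: "N \<le> m" and y: "y \<in> S"
    have sf: "summable (\<lambda>n. f n y)"
      by (rule summable_comparison_test[OF _ M]) (use bnd y in auto)
    have "(\<Sum>n. f n y) = (\<Sum>n. f (n + m) y) + (\<Sum>n<m. f n y)"
      by (rule suminf_split_initial_segment[OF sf])
    moreover have "\<bar>\<Sum>n. f (n + m) y\<bar> \<le> (\<Sum>n. M (n + m))"
      by (rule norm_suminf_le[of "\<lambda>n. f (n + m) y" "\<lambda>n. M (n + m)", simplified])
        (use bnd y summable_ignore_initial_segment[OF M] in auto)
    moreover have "(\<Sum>n. M (n + m)) < ep" using N m by auto
    ultimately show "\<bar>(\<Sum>n<m. f n y) - (\<Sum>n. f n y)\<bar> \<le> ep" by linarith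
  qed
qed

lemma ev_in_open: "open V \<Longrightarrow> (0::real) \<in> V \<Longrightarrow> eventually (\<lambda>e. e \<in> V) (at 0)"
  using eventually_at_topological by blast

lemma ev_small: "(r::real) > 0 \<Longrightarrow> eventually (\<lambda>e. \<bar>e\<bar> < r) (at 0)"
  using eventually_at[of "\<lambda>e. \<bar>e\<bar> < r" 0 UNIV] by (auto simp: dist_real_def intro!: exI[of _ r])

lemma ev_nz: "eventually (\<lambda>e::real. e \<noteq> 0) (at 0)"
  by (simp add: eventually_at_filter)


context setting begin

lemma rV: obtains r where "r > 0" "cball 0 r \<subseteq> V"
  using open_contains_cball V by blast

lemma hC1: "e \<in> V \<Longrightarrow> C1 (h e)"
  using stat C2_C1 by blast

lemma h_int: "e \<in> V \<Longrightarrow> Iv (h e) = 1"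
proof -
  assume e: "e \<in> V"
  have sd: "stationary_density a b (L e) (h e)" using stat[OF e] by blast
  then have "integrable (mX a b) (h e)" "integral\<^sup>L (mX a b) (h e) = 1"
    unfolding stationary_density_def by auto
  then show ?thesis using trunc_integral_eq[OF ab _ C1_cont[OF hC1[OF e]]] by simp
qed

lemma fix_h: "e \<in> V \<Longrightarrow> x \<in> {a..b} \<Longrightarrow> L e (h e) x = h e x"
proof -
  assume e: "e \<in> V" and x: "x \<in> {a..b}"
  have sd: "stationary_density a b (L e) (h e)" using stat[OF e] by blast
  then have ae: "AE x in mX a b. L e (h e) x = h e x" unfolding stationary_density_def by blast
  show ?thesis using AE_cont_eq[OF ab C1_cont[OF Lmap[OF e hC1[OF e]]] C1_cont[OF hC1[OF e]] ae] x by blast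
qed

lemma psi_lin:
  assumes "C1 \<phi>" "C1 \<psi>" "z \<in> Z" "e \<in> V" "x \<in> {a..b}"
  shows "psi a b I g P (\<lambda>y. c * \<phi> y + d * \<psi> y) z e x = c * psi a b I g P \<phi> z e x + d * psi a b I g P \<psi> z e x"
proof -
  have i1: "integrable (P e) (\<lambda>\<omega>. c * bterm a b I g \<phi> z \<omega> x)" using B2_int[OF assms(1,3,4,5)] by simp
  have i2: "integrable (P e) (\<lambda>\<omega>. d * bterm a b I g \<psi> z \<omega> x)" using B2_int[OF assms(2,3,4,5)] by simp
  show ?thesis unfolding psi_def bterm_lin using Bochner_Integration.integral_add[OF i1 i2] by simp
qed

lemma Lin:
  assumes e: "e \<in> V" and c1: "C1 \<phi>" "C1 \<psi>" and x: "x \<in> {a..b}"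
  shows "L e (\<lambda>y. c * \<phi> y + d * \<psi> y) x = c * L e \<phi> x + d * L e \<psi> x"
proof -
  have cl: "C1 (\<lambda>y. c * \<phi> y + d * \<psi> y)" by (rule C1_lin(1)[OF ab c1])
  have eq: "zx Z (\<lambda>z. psi a b I g P (\<lambda>y. c * \<phi> y + d * \<psi> y) z e x) =
     (\<lambda>n. c * zx Z (\<lambda>z. psi a b I g P \<phi> z e x) n + d * zx Z (\<lambda>z. psi a b I g P \<psi> z e x) n)"
    using psi_lin[OF c1 _ e x] unfolding zx_def by auto
  have s1: "summable (zx Z (\<lambda>z. psi a b I g P \<phi> z e x))"
    using LP_eq(2)[OF e c1(1) x] summable_rabs_cancel by blast
  have s2: "summable (zx Z (\<lambda>z. psi a b I g P \<psi> z e x))"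
    using LP_eq(2)[OF e c1(2) x] summable_rabs_cancel by blast
  have "L e (\<lambda>y. c * \<phi> y + d * \<psi> y) x = suminf (\<lambda>n. c * zx Z (\<lambda>z. psi a b I g P \<phi> z e x) n + d * zx Z (\<lambda>z. psi a b I g P \<psi> z e x) n)"
    using LP_eq(1)[OF e cl x] eq by simp
  also have "\<dots> = suminf (\<lambda>n. c * zx Z (\<lambda>z. psi a b I g P \<phi> z e x) n) + suminf (\<lambda>n. d * zx Z (\<lambda>z. psi a b I g P \<psi> z e x) n)"
    using summable_mult[OF s1] summable_mult[OF s2] by (rule suminf_add[symmetric])
  also have "\<dots> = c * L e \<phi> x + d * L e \<psi> x"
    using suminf_mult[OF s1] suminf_mult[OF s2] LP_eq(1)[OF e c1(1) x] LP_eq(1)[OF e c1(2) x] by simp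
  finally show ?thesis .
qed

lemma Lpow_lin:
  assumes e: "e \<in> V" and c1: "C1 \<phi>" "C1 \<psi>"
  shows "\<forall>x\<in>{a..b}. (L e ^^ n) (\<lambda>y. c * \<phi> y + d * \<psi> y) x = c * (L e ^^ n) \<phi> x + d * (L e ^^ n) \<psi> x"
proof (induction n)
  case 0 then show ?case by simp
next
  case (Suc n)
  show ?case
  proof
    fix x assume x: "x \<in> {a..b}"
    have "(L e ^^ Suc n) (\<lambda>y. c * \<phi> y + d * \<psi> y) x = L e ((L e ^^ n) (\<lambda>y. c * \<phi> y + d * \<psi> y)) x" by simp
    also have "\<dots> = L e (\<lambda>y. c * (L e ^^ n) \<phi> y + d * (L e ^^ n) \<psi> y) x"
      using Suc.IH x by (intro L_cong) auto
    also have "\<dots> = c * L e ((L e ^^ n) \<phi>) x + d * L e ((L e ^^ n) \<psi>) x"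
      by (rule Lin[OF e Lpow_C1[OF e c1(1)] Lpow_C1[OF e c1(2)] x])
    finally show "(L e ^^ Suc n) (\<lambda>y. c * \<phi> y + d * \<psi> y) x = c * (L e ^^ Suc n) \<phi> x + d * (L e ^^ Suc n) \<psi> x" by simp
  qed
qed

lemma Lpow_fix: "e \<in> V \<Longrightarrow> \<forall>x\<in>{a..b}. (L e ^^ n) (h e) x = h e x"
proof (induction n)
  case 0 then show ?case by simp
next
  case (Suc n)
  show ?case
  proof
    fix x assume x: "x \<in> {a..b}"
    have "(L e ^^ Suc n) (h e) x = L e ((L e ^^ n) (h e)) x" by simp
    also have "\<dots> = L e (h e) x" using Suc x by (intro L_cong) auto
    also have "\<dots> = h e x" using fix_h Suc.prems x by blast
    finally show "(L e ^^ Suc n) (h e) x = h e x" .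
  qed
qed

lemma Iv_lin: "C1 \<phi> \<Longrightarrow> C1 \<psi> \<Longrightarrow> Iv (\<lambda>y. c * \<phi> y + d * \<psi> y) = c * Iv \<phi> + d * Iv \<psi>"
  using trunc_lin[OF ab C1_cont C1_cont] by blast

lemma Iv_bound: "C1 \<phi> \<Longrightarrow> \<bar>Iv \<phi>\<bar> \<le> N \<phi>"
  using trunc_bound[OF ab C1_cont, of \<phi> "N \<phi>"] N_upper(1) by blast

lemma Iv_cong: "(\<And>y. y \<in> {a..b} \<Longrightarrow> \<phi> y = \<psi> y) \<Longrightarrow> Iv \<phi> = Iv \<psi>"
  using trunc_cong by metis

lemma gapC: obtains \<theta> C where "0 < \<theta>" "\<theta> < 1" "1 \<le> C"
  "\<And>e n \<phi>. e \<in> V \<Longrightarrow> C1 \<phi> \<Longrightarrow> Iv \<phi> = 0 \<Longrightarrow> N ((L e ^^ n) \<phi>) \<le> C * \<theta> ^ n * N \<phi>"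
proof -
  obtain \<theta> C where tc: "0 < \<theta>" "\<theta> < 1" "0 < C"
    and G: "\<And>e n \<phi>. e \<in> V \<Longrightarrow> n \<ge> 1 \<Longrightarrow> C1 \<phi> \<Longrightarrow> Iv \<phi> = 0 \<Longrightarrow> N ((L e ^^ n) \<phi>) \<le> C * \<theta> ^ n * N \<phi>"
    using gap_consts by blast
  have "N ((L e ^^ n) \<phi>) \<le> max C 1 * \<theta> ^ n * N \<phi>" if "e \<in> V" "C1 \<phi>" "Iv \<phi> = 0" for e n \<phi>
  proof (cases "n = 0")
    case True
    then show ?thesis using N_nonneg[OF that(2)] ab mult_right_mono[of 1 "max C 1" "N \<phi>"] by simp
  next
    case False
    then have "N ((L e ^^ n) \<phi>) \<le> C * \<theta> ^ n * N \<phi>" using G that by simp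
    also have "\<dots> \<le> max C 1 * \<theta> ^ n * N \<phi>"
      using N_nonneg[OF that(2)] ab tc by (intro mult_right_mono) auto
    finally show ?thesis .
  qed
  then show ?thesis using that tc by (meson max.cobounded2)
qed

lemma Iv_pres:
  assumes e: "e \<in> V" and c: "C1 \<phi>"
  shows "Iv (L e \<phi>) = Iv \<phi>"
proof -
  obtain \<theta> C where tc: "0 < \<theta>" "\<theta> < 1" "1 \<le> C"
    and G: "\<And>e n \<phi>. e \<in> V \<Longrightarrow> C1 \<phi> \<Longrightarrow> Iv \<phi> = 0 \<Longrightarrow> N ((L e ^^ n) \<phi>) \<le> C * \<theta> ^ n * N \<phi>"
    using gapC by blast
  have hc: "C1 (h e)" by (rule hC1[OF e])
  have lim: "(\<lambda>n. Iv ((L e ^^ n) \<psi>)) \<longlonglongrightarrow> Iv \<psi>" if c\<psi>: "C1 \<psi>" for \<psi>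
  proof -
    define k where "k = Iv \<psi>"
    define \<psi>0 where "\<psi>0 y = 1 * \<psi> y + (- k) * h e y" for y
    have c0: "C1 \<psi>0" unfolding \<psi>0_def by (rule C1_lin(1)[OF ab c\<psi> hc])
    have i0: "Iv \<psi>0 = 0" unfolding \<psi>0_def Iv_lin[OF c\<psi> hc] h_int[OF e] k_def by simp
    have dec: "\<psi> y = 1 * \<psi>0 y + k * h e y" if "y \<in> {a..b}" for y unfolding \<psi>0_def by simp
    have eqn: "Iv ((L e ^^ n) \<psi>) = Iv ((L e ^^ n) \<psi>0) + k" for n
    proof -
      have "\<forall>x\<in>{a..b}. (L e ^^ n) \<psi> x = (L e ^^ n) (\<lambda>y. 1 * \<psi>0 y + k * h e y) x"
        using dec by (intro Lpow_cong) auto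
      moreover have "\<forall>x\<in>{a..b}. (L e ^^ n) (\<lambda>y. 1 * \<psi>0 y + k * h e y) x = 1 * (L e ^^ n) \<psi>0 x + k * (L e ^^ n) (h e) x"
        by (rule Lpow_lin[OF e c0 hc])
      ultimately have "\<forall>x\<in>{a..b}. (L e ^^ n) \<psi> x = 1 * (L e ^^ n) \<psi>0 x + k * h e x"
        using Lpow_fix[OF e] by simp
      then have "Iv ((L e ^^ n) \<psi>) = Iv (\<lambda>x. 1 * (L e ^^ n) \<psi>0 x + k * h e x)" by (intro Iv_cong) auto
      also have "\<dots> = Iv ((L e ^^ n) \<psi>0) + k" using Iv_lin[OF Lpow_C1[OF e c0] hc, where c=1 and d=k] h_int[OF e] by simp
      finally show ?thesis .
    qed
    have bnd: "\<bar>Iv ((L e ^^ n) \<psi>0)\<bar> \<le> C * N \<psi>0 * \<theta> ^ n" for n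
      using Iv_bound[OF Lpow_C1[OF e c0], of n] G[OF e c0 i0, of n] by (simp add: algebra_simps)
    have "(\<lambda>n. \<theta> ^ n) \<longlonglongrightarrow> 0" by (rule LIMSEQ_power_zero) (use tc in simp)
    then have "(\<lambda>n. C * N \<psi>0 * \<theta> ^ n) \<longlonglongrightarrow> C * N \<psi>0 * 0" by (rule tendsto_mult_left)
    then have g0: "(\<lambda>n. C * N \<psi>0 * \<theta> ^ n) \<longlonglongrightarrow> 0" by simp
    have "\<forall>n. norm (Iv ((L e ^^ n) \<psi>0)) \<le> C * N \<psi>0 * \<theta> ^ n" using bnd by simp
    then have "(\<lambda>n. Iv ((L e ^^ n) \<psi>0)) \<longlonglongrightarrow> 0"
      by (intro Lim_null_comparison[OF always_eventually g0])
    then have "(\<lambda>n. Iv ((L e ^^ n) \<psi>0) + k) \<longlonglongrightarrow> 0 + k" by (intro tendsto_add tendsto_const)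
    then show ?thesis unfolding eqn k_def by simp
  qed
  have l1: "(\<lambda>n. Iv ((L e ^^ Suc n) \<phi>)) \<longlonglongrightarrow> Iv \<phi>"
    using lim[OF c] by (rule LIMSEQ_Suc)
  have "(\<lambda>n. Iv ((L e ^^ n) (L e \<phi>))) \<longlonglongrightarrow> Iv (L e \<phi>)" by (rule lim[OF Lmap[OF e c]])
  moreover have "(L e ^^ n) (L e \<phi>) = (L e ^^ Suc n) \<phi>" for n
    using funpow_Suc_right[of n "L e"] by (simp only: comp_def)
  ultimately have l2: "(\<lambda>n. Iv ((L e ^^ Suc n) \<phi>)) \<longlonglongrightarrow> Iv (L e \<phi>)" by simp
  show ?thesis using LIMSEQ_unique[OF l2 l1] .
qed

end

lemma sum_sup_zx:
  assumes "sum_sup Z V S F < \<top>"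
  shows "\<exists>M. (\<forall>n. 0 \<le> M n) \<and> summable M \<and> (\<forall>n. \<forall>e\<in>V. \<forall>x\<in>S. \<bar>zx Z (\<lambda>z. F z e x) n\<bar> \<le> M n)"
proof -
  obtain M where M: "\<forall>n. 0 \<le> M n" "summable M" "\<forall>z\<in>Z. \<forall>e\<in>V. \<forall>x\<in>S. \<bar>F z e x\<bar> \<le> M z"
    using sum_sup_bound[OF assms] by blast
  have "\<forall>n. \<forall>e\<in>V. \<forall>x\<in>S. \<bar>zx Z (\<lambda>z. F z e x) n\<bar> \<le> M n"
    using M(1,3) unfolding zx_def by simp
  then show ?thesis using M by blast
qed

context setting begin

lemma term_conv:
  fixes F :: "real \<Rightarrow> real \<Rightarrow> real" and ep :: real
  assumes cont: "continuous_on (V \<times> {a..b}) (\<lambda>(e, y). F e y)" and ep: "ep > 0"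
  shows "eventually (\<lambda>t. \<forall>x\<in>{a..b}. \<bar>F t x - F 0 x\<bar> \<le> ep) (at 0)"
proof -
  obtain r where r: "r > 0" "cball 0 r \<subseteq> V" using rV by blast
  obtain d where d: "d > 0" "\<forall>t x. \<bar>t\<bar> < d \<longrightarrow> \<bar>t\<bar> \<le> r \<longrightarrow> x \<in> {a..b} \<longrightarrow> \<bar>F t x - F 0 x\<bar> \<le> ep"
    using unif_cont_pt[OF cont r ep] by blast
  show ?thesis using ev_small[OF d(1)] ev_small[OF r(1)]
    by eventually_elim (use d(2) in auto)
qed

lemma psi_C1:
  assumes c: "C1 \<phi>" and z: "z \<in> Z" and e: "e \<in> V"
  shows "C1 (\<lambda>y. psi a b I g P \<phi> z e y)"
    "\<And>x. dX a b (\<lambda>y. psi a b I g P \<phi> z e y) x = d_x a b (psi a b I g P \<phi> z) e x"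
proof -
  show d: "\<And>x. dX a b (\<lambda>y. psi a b I g P \<phi> z e y) x = d_x a b (psi a b I g P \<phi> z) e x"
    unfolding d_x_def ..
  have "continuous_on (V \<times> {a..b}) (\<lambda>(e, y). d_x a b (psi a b I g P \<phi> z) e y)"
    using B2_cont[OF c z] by blast
  then have "continuous_on {a..b} (\<lambda>y. (\<lambda>(e, y). d_x a b (psi a b I g P \<phi> z) e y) (e, y))"
    by (rule continuous_on_compose2) (use e in \<open>auto intro!: continuous_intros\<close>)
  then have "continuous_on {a..b} (\<lambda>y. vector_derivative (\<lambda>y. psi a b I g P \<phi> z e y) (at y within {a..b}))"
    unfolding d_x_def dX_def by simp
  moreover have "\<forall>x\<in>{a..b}. (\<lambda>y. psi a b I g P \<phi> z e y) differentiable (at x within {a..b})"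
    using B2_diff[OF c z e] by blast
  ultimately show "C1 (\<lambda>y. psi a b I g P \<phi> z e y)" unfolding C1_iff by blast
qed

lemma zpsi_C1:
  assumes c: "C1 \<phi>" and e: "e \<in> V"
  shows "C1 (\<lambda>y. zx Z (\<lambda>z. psi a b I g P \<phi> z e y) n)"
    "\<And>x. x \<in> {a..b} \<Longrightarrow> dX a b (\<lambda>y. zx Z (\<lambda>z. psi a b I g P \<phi> z e y) n) x = zx Z (\<lambda>z. d_x a b (psi a b I g P \<phi> z) e x) n"
proof -
  show "C1 (\<lambda>y. zx Z (\<lambda>z. psi a b I g P \<phi> z e y) n)"
    using psi_C1(1)[OF c _ e, of n] C1_const[OF ab, of 0] unfolding zx_def by (cases "n \<in> Z") auto
  show "\<And>x. x \<in> {a..b} \<Longrightarrow> dX a b (\<lambda>y. zx Z (\<lambda>z. psi a b I g P \<phi> z e y) n) x = zx Z (\<lambda>z. d_x a b (psi a b I g P \<phi> z) e x) n"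
  proof -
    fix x assume x: "x \<in> {a..b}"
    show "dX a b (\<lambda>y. zx Z (\<lambda>z. psi a b I g P \<phi> z e y) n) x = zx Z (\<lambda>z. d_x a b (psi a b I g P \<phi> z) e x) n"
    proof (cases "n \<in> Z")
      case True then show ?thesis using psi_C1(2)[OF c True e] unfolding zx_def by simp
    next
      case False then show ?thesis using C1_intro(2)[OF ab, of "\<lambda>y. 0" "\<lambda>y. 0" x] x unfolding zx_def by simp
    qed
  qed
qed

lemma TD:
  assumes c: "C1 \<phi>" and e: "e \<in> V" and x: "x \<in> {a..b}"
  shows "dX a b (L e \<phi>) x = suminf (zx Z (\<lambda>z. d_x a b (psi a b I g P \<phi> z) e x))"
proof -
  obtain M0 where M0: "\<forall>n. 0 \<le> M0 n" "summable M0" "\<forall>n. \<forall>e\<in>V. \<forall>x\<in>{a..b}. \<bar>zx Z (\<lambda>z. psi a b I g P \<phi> z e x) n\<bar> \<le> M0 n"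
    using sum_sup_zx[OF conjunct1[OF B2_sum[OF c]]] by blast
  obtain M1 where M1: "\<forall>n. 0 \<le> M1 n" "summable M1" "\<forall>n. \<forall>e\<in>V. \<forall>x\<in>{a..b}. \<bar>zx Z (\<lambda>z. d_x a b (psi a b I g P \<phi> z) e x) n\<bar> \<le> M1 n"
    using sum_sup_zx[OF conjunct2[OF B2_sum[OF c]]] by blast
  define f where "f m y = (\<Sum>n<m. zx Z (\<lambda>z. psi a b I g P \<phi> z e y) n)" for m y
  define F where "F y = suminf (zx Z (\<lambda>z. psi a b I g P \<phi> z e y))" for y
  define G where "G y = suminf (zx Z (\<lambda>z. d_x a b (psi a b I g P \<phi> z) e y))" for y
  have fs: "C1 (f m) \<and> (\<forall>x\<in>{a..b}. dX a b (f m) x = (\<Sum>n<m. dX a b (\<lambda>y. zx Z (\<lambda>z. psi a b I g P \<phi> z e y) n) x))" for m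
    unfolding f_def by (rule C1_sum[OF ab]) (use zpsi_C1(1)[OF c e] in auto)
  have df: "dX a b (f m) y = (\<Sum>n<m. zx Z (\<lambda>z. d_x a b (psi a b I g P \<phi> z) e y) n)" if "y \<in> {a..b}" for m y
    using fs[of m] zpsi_C1(2)[OF c e that] that by simp
  have UL1: "C1 F" "\<And>x. x \<in> {a..b} \<Longrightarrow> dX a b F x = G x"
  proof -
    have uf: "eventually (\<lambda>m. \<forall>x\<in>{a..b}. \<bar>f m x - F x\<bar> \<le> ep) sequentially" if "ep > 0" for ep
      unfolding f_def F_def
      by (rule tail_unif[OF M0(2) _ that]) (use M0(3) e in blast)
    have ud: "eventually (\<lambda>m. \<forall>x\<in>{a..b}. \<bar>dX a b (f m) x - G x\<bar> \<le> ep) sequentially" if "ep > 0" for ep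
    proof -
      have "eventually (\<lambda>m. \<forall>x\<in>{a..b}. \<bar>(\<Sum>n<m. zx Z (\<lambda>z. d_x a b (psi a b I g P \<phi> z) e x) n) - G x\<bar> \<le> ep) sequentially"
        unfolding G_def by (rule tail_unif[OF M1(2) _ that]) (use M1(3) e in blast)
      then show ?thesis by eventually_elim (use df in simp)
    qed
    show "C1 F" "\<And>x. x \<in> {a..b} \<Longrightarrow> dX a b F x = G x"
      using UL[OF ab _ uf ud] fs by blast+
  qed
  have "dX a b (L e \<phi>) x = dX a b F x"
    using LP_eq(1)[OF e c] unfolding F_def by (intro dX_cong[OF x]) simp
  then show ?thesis using UL1(2)[OF x] unfolding G_def by simp
qed

end

context setting begin

lemma zx_conv:
  fixes F :: "nat \<Rightarrow> real \<Rightarrow> real \<Rightarrow> real"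
  assumes "\<And>z. z \<in> Z \<Longrightarrow> continuous_on (V \<times> {a..b}) (\<lambda>(e, y). F z e y)" "ep > 0"
  shows "eventually (\<lambda>e. \<forall>x\<in>{a..b}. \<bar>zx Z (\<lambda>z. F z e x) n - zx Z (\<lambda>z. F z 0 x) n\<bar> \<le> ep) (at 0)"
proof (cases "n \<in> Z")
  case True
  show ?thesis using term_conv[OF assms(1)[OF True] assms(2)] by eventually_elim (use True in \<open>simp add: zx_def\<close>)
next
  case False then show ?thesis using assms(2) by (simp add: zx_def)
qed

lemma zx_tannery:
  fixes F :: "nat \<Rightarrow> real \<Rightarrow> real \<Rightarrow> real" and Mb :: "nat \<Rightarrow> real"
  assumes cont: "\<And>z. z \<in> Z \<Longrightarrow> continuous_on (V \<times> {a..b}) (\<lambda>(e, y). F z e y)"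
    and Mb: "\<forall>n. 0 \<le> Mb n" "summable Mb" "\<forall>n. \<forall>e\<in>V. \<forall>x\<in>{a..b}. \<bar>zx Z (\<lambda>z. F z e x) n\<bar> \<le> Mb n"
    and ep: "ep > 0"
  shows "eventually (\<lambda>e. \<forall>x\<in>{a..b}. \<bar>\<Sum>n. zx Z (\<lambda>z. F z e x) n - zx Z (\<lambda>z. F z 0 x) n\<bar> \<le> ep) (at 0)"
proof (rule tannery_unif[where M="\<lambda>n. 2 * Mb n"])
  show "summable (\<lambda>n. 2 * Mb n)" using Mb(2) by (rule summable_mult)
  show "\<And>n. 0 \<le> 2 * Mb n" using Mb(1) by simp
  show "\<forall>\<^sub>F e in at 0. \<forall>n. \<forall>x\<in>{a..b}. \<bar>zx Z (\<lambda>z. F z e x) n - zx Z (\<lambda>z. F z 0 x) n\<bar> \<le> 2 * Mb n"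
    using ev_in_open[OF V]
  proof eventually_elim
    case (elim e)
    show ?case
    proof (intro allI ballI)
      fix n x assume x: "x \<in> {a..b}"
      have "\<bar>zx Z (\<lambda>z. F z e x) n\<bar> \<le> Mb n" using Mb(3) elim x by blast
      moreover have "\<bar>zx Z (\<lambda>z. F z 0 x) n\<bar> \<le> Mb n" using Mb(3) V(2) x by blast
      ultimately show "\<bar>zx Z (\<lambda>z. F z e x) n - zx Z (\<lambda>z. F z 0 x) n\<bar> \<le> 2 * Mb n" by linarith
    qed
  qed
  show "\<And>n e. 0 < e \<Longrightarrow> \<forall>\<^sub>F t in at 0. \<forall>x\<in>{a..b}. \<bar>zx Z (\<lambda>z. F z t x) n - zx Z (\<lambda>z. F z 0 x) n\<bar> \<le> e"
    by (rule zx_conv[OF cont]) auto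
  show "0 < ep" by (rule ep)
qed

lemma zx_summable:
  fixes Mb :: "nat \<Rightarrow> real"
  assumes "\<forall>n. 0 \<le> Mb n" "summable Mb" "\<forall>n. \<forall>e\<in>V. \<forall>x\<in>{a..b}. \<bar>zx Z (\<lambda>z. F z e x) n\<bar> \<le> Mb n"
    "e \<in> V" "x \<in> {a..b}"
  shows "summable (\<lambda>n. zx Z (\<lambda>z. F z e x) n)"
  by (rule summable_comparison_test[OF _ assms(2)]) (use assms in auto)

lemma SC:
  assumes c: "C1 \<phi>" and ep: "ep > 0"
  shows "eventually (\<lambda>e. N (\<lambda>x. L e \<phi> x - L 0 \<phi> x) \<le> ep) (at 0)"
proof -
  obtain M0 where M0: "\<forall>n. 0 \<le> M0 n" "summable M0" "\<forall>n. \<forall>e\<in>V. \<forall>x\<in>{a..b}. \<bar>zx Z (\<lambda>z. psi a b I g P \<phi> z e x) n\<bar> \<le> M0 n"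
    using sum_sup_zx[OF conjunct1[OF B2_sum[OF c]]] by blast
  obtain M1 where M1: "\<forall>n. 0 \<le> M1 n" "summable M1" "\<forall>n. \<forall>e\<in>V. \<forall>x\<in>{a..b}. \<bar>zx Z (\<lambda>z. d_x a b (psi a b I g P \<phi> z) e x) n\<bar> \<le> M1 n"
    using sum_sup_zx[OF conjunct2[OF B2_sum[OF c]]] by blast
  have e2: "ep/2 > 0" using ep by simp
  have ev1: "eventually (\<lambda>e. \<forall>x\<in>{a..b}. \<bar>\<Sum>n. zx Z (\<lambda>z. psi a b I g P \<phi> z e x) n - zx Z (\<lambda>z. psi a b I g P \<phi> z 0 x) n\<bar> \<le> ep/2) (at 0)"
    by (rule zx_tannery[OF _ M0 e2]) (use B2_cont[OF c] in blast)
  have ev2: "eventually (\<lambda>e. \<forall>x\<in>{a..b}. \<bar>\<Sum>n. zx Z (\<lambda>z. d_x a b (psi a b I g P \<phi> z) e x) n - zx Z (\<lambda>z. d_x a b (psi a b I g P \<phi> z) 0 x) n\<bar> \<le> ep/2) (at 0)"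
    by (rule zx_tannery[OF _ M1 e2]) (use B2_cont[OF c] in blast)
  show ?thesis using ev1 ev2 ev_in_open[OF V]
  proof eventually_elim
    case (elim e)
    have "N (\<lambda>x. L e \<phi> x - L 0 \<phi> x) \<le> ep/2 + ep/2"
    proof (rule N_le)
      show "a \<le> b" using ab by simp
    next
      fix x assume x: "x \<in> {a..b}"
      have "L e \<phi> x - L 0 \<phi> x = (\<Sum>n. zx Z (\<lambda>z. psi a b I g P \<phi> z e x) n) - (\<Sum>n. zx Z (\<lambda>z. psi a b I g P \<phi> z 0 x) n)"
        using LP_eq(1)[OF elim(3) c x] LP_eq(1)[OF V(2) c x] by simp
      also have "\<dots> = (\<Sum>n. zx Z (\<lambda>z. psi a b I g P \<phi> z e x) n - zx Z (\<lambda>z. psi a b I g P \<phi> z 0 x) n)"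
        by (rule suminf_diff) (use zx_summable[OF M0 elim(3) x] zx_summable[OF M0 V(2) x] in auto)
      finally show "\<bar>L e \<phi> x - L 0 \<phi> x\<bar> \<le> ep/2" using elim(1) x by simp
      have "dX a b (\<lambda>x. L e \<phi> x - L 0 \<phi> x) x = dX a b (L e \<phi>) x - dX a b (L 0 \<phi>) x"
        by (rule C1_diff(2)[OF ab Lmap[OF elim(3) c] Lmap[OF V(2) c] x])
      also have "\<dots> = (\<Sum>n. zx Z (\<lambda>z. d_x a b (psi a b I g P \<phi> z) e x) n) - (\<Sum>n. zx Z (\<lambda>z. d_x a b (psi a b I g P \<phi> z) 0 x) n)"
        using TD[OF c elim(3) x] TD[OF c V(2) x] by simp
      also have "\<dots> = (\<Sum>n. zx Z (\<lambda>z. d_x a b (psi a b I g P \<phi> z) e x) n - zx Z (\<lambda>z. d_x a b (psi a b I g P \<phi> z) 0 x) n)"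
        by (rule suminf_diff) (use zx_summable[OF M1 elim(3) x] zx_summable[OF M1 V(2) x] in auto)
      finally show "\<bar>dX a b (\<lambda>x. L e \<phi> x - L 0 \<phi> x) x\<bar> \<le> ep/2" using elim(2) x by simp
    qed
    then show ?case by simp
  qed
qed

end

context setting begin

lemma quot_conv:
  fixes F F' :: "nat \<Rightarrow> real \<Rightarrow> real \<Rightarrow> real" and Mb :: "nat \<Rightarrow> real" and ep :: real
  assumes der: "\<And>z s x. z \<in> Z \<Longrightarrow> s \<in> V \<Longrightarrow> x \<in> {a..b} \<Longrightarrow> ((\<lambda>e. F z e x) has_real_derivative F' z s x) (at s)"
    and cont: "\<And>z. z \<in> Z \<Longrightarrow> continuous_on (V \<times> {a..b}) (\<lambda>(e, y). F' z e y)"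
    and Mb: "\<forall>n. 0 \<le> Mb n" "summable Mb" "\<forall>n. \<forall>e\<in>V. \<forall>x\<in>{a..b}. \<bar>zx Z (\<lambda>z. F' z e x) n\<bar> \<le> Mb n"
    and ep: "ep > 0"
  shows "eventually (\<lambda>e. \<forall>x\<in>{a..b}. \<bar>\<Sum>n. (zx Z (\<lambda>z. F z e x) n - zx Z (\<lambda>z. F z 0 x) n) / e - zx Z (\<lambda>z. F' z 0 x) n\<bar> \<le> ep) (at 0)"
proof -
  obtain r where r: "r > 0" "cball 0 r \<subseteq> V" using rV by blast
  have mvt: "\<exists>s. \<bar>s\<bar> \<le> \<bar>e\<bar> \<and> (F z e x - F z 0 x) / e = F' z s x"
    if "z \<in> Z" "e \<noteq> 0" "\<bar>e\<bar> < r" "x \<in> {a..b}" for z e x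
  proof -
    have "\<exists>s. \<bar>s\<bar> \<le> \<bar>e\<bar> \<and> F z e x - F z 0 x = e * F' z s x"
    proof (rule mvt0[OF that(2)])
      fix s :: real assume "\<bar>s\<bar> \<le> \<bar>e\<bar>"
      then have "s \<in> V" using r that(3) by (intro subsetD[OF r(2)]) auto
      then show "((\<lambda>t. F z t x) has_real_derivative F' z s x) (at s)" using der that by blast
    qed
    then show ?thesis using that(2) by auto
  qed
  show ?thesis
  proof (rule tannery_unif[where M="\<lambda>n. 2 * Mb n"])
    show "summable (\<lambda>n. 2 * Mb n)" using Mb(2) by (rule summable_mult)
    show "\<And>n. 0 \<le> 2 * Mb n" using Mb(1) by simp
    show "0 < ep" by (rule ep)
    show "\<forall>\<^sub>F e in at 0. \<forall>n. \<forall>x\<in>{a..b}. \<bar>(zx Z (\<lambda>z. F z e x) n - zx Z (\<lambda>z. F z 0 x) n) / e - zx Z (\<lambda>z. F' z 0 x) n\<bar> \<le> 2 * Mb n"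
      using ev_small[OF r(1)] ev_nz
    proof eventually_elim
      case (elim e)
      show ?case
      proof (intro allI ballI)
        fix n x assume x: "x \<in> {a..b}"
        show "\<bar>(zx Z (\<lambda>z. F z e x) n - zx Z (\<lambda>z. F z 0 x) n) / e - zx Z (\<lambda>z. F' z 0 x) n\<bar> \<le> 2 * Mb n"
        proof (cases "n \<in> Z")
          case False then show ?thesis using Mb(1) by (simp add: zx_def)
        next
          case True
          obtain s where s: "\<bar>s\<bar> \<le> \<bar>e\<bar>" "(F n e x - F n 0 x) / e = F' n s x" using mvt[OF True elim(2,1) x] by blast
          have sV: "s \<in> V" using s(1) elim(1) r by (intro subsetD[OF r(2)]) auto
          have "\<bar>zx Z (\<lambda>z. F' z s x) n\<bar> \<le> Mb n" using Mb(3) sV x by blast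
          then have "\<bar>F' n s x\<bar> \<le> Mb n" using True by (simp add: zx_def)
          moreover have "\<bar>zx Z (\<lambda>z. F' z 0 x) n\<bar> \<le> Mb n" using Mb(3) V(2) x by blast
          then have "\<bar>F' n 0 x\<bar> \<le> Mb n" using True by (simp add: zx_def)
          ultimately show ?thesis using True s(2) by (simp add: zx_def)
        qed
      qed
    qed
    show "\<forall>\<^sub>F e in at 0. \<forall>x\<in>{a..b}. \<bar>(zx Z (\<lambda>z. F z e x) n - zx Z (\<lambda>z. F z 0 x) n) / e - zx Z (\<lambda>z. F' z 0 x) n\<bar> \<le> ep'"
      if ep': "0 < ep'" for n ep'
    proof (cases "n \<in> Z")
      case False then show ?thesis using ep' by (simp add: zx_def)
    next
      case True
      obtain d where d: "d > 0" "\<forall>t x. \<bar>t\<bar> < d \<longrightarrow> \<bar>t\<bar> \<le> r \<longrightarrow> x \<in> {a..b} \<longrightarrow> \<bar>F' n t x - F' n 0 x\<bar> \<le> ep'"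
        using unif_cont_pt[OF cont[OF True] r ep'] by blast
      show ?thesis using ev_small[OF r(1)] ev_small[OF d(1)] ev_nz
      proof eventually_elim
        case (elim e)
        show ?case
        proof
          fix x assume x: "x \<in> {a..b}"
          obtain s where s: "\<bar>s\<bar> \<le> \<bar>e\<bar>" "(F n e x - F n 0 x) / e = F' n s x" using mvt[OF True elim(3,1) x] by blast
          have "\<bar>F' n s x - F' n 0 x\<bar> \<le> ep'" using d(2) s(1) elim x by force
          then show "\<bar>(zx Z (\<lambda>z. F z e x) n - zx Z (\<lambda>z. F z 0 x) n) / e - zx Z (\<lambda>z. F' z 0 x) n\<bar> \<le> ep'"
            using True s(2) by (simp add: zx_def)
        qed
      qed
    qed
  qed
qed

end

context setting begin

definition "Dfun x = suminf (zx Z (\<lambda>z. d_eps (psi a b I g P (h 0) z) 0 x))"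
definition "Efun x = suminf (zx Z (\<lambda>z. d_eps (d_x a b (psi a b I g P (h 0) z)) 0 x))"
definition "wq e x = (L e (h 0) x - h 0 x) / e"

lemma h0C1: "C1 (h 0)" using hC1[OF V(2)] .

lemma MP_ex: obtains Mb where "\<forall>n. 0 \<le> Mb n" "summable Mb" "\<forall>n. \<forall>e\<in>V. \<forall>x\<in>{a..b}. \<bar>zx Z (\<lambda>z. psi a b I g P (h 0) z e x) n\<bar> \<le> Mb n"
  using sum_sup_zx[OF conjunct1[OF B2_sum[OF h0C1]]] by blast
lemma MQ_ex: obtains Mb where "\<forall>n. 0 \<le> Mb n" "summable Mb" "\<forall>n. \<forall>e\<in>V. \<forall>x\<in>{a..b}. \<bar>zx Z (\<lambda>z. d_x a b (psi a b I g P (h 0) z) e x) n\<bar> \<le> Mb n"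
  using sum_sup_zx[OF conjunct2[OF B2_sum[OF h0C1]]] by blast
lemma MD_ex: obtains Mb where "\<forall>n. 0 \<le> Mb n" "summable Mb" "\<forall>n. \<forall>e\<in>V. \<forall>x\<in>{a..b}. \<bar>zx Z (\<lambda>z. d_eps (psi a b I g P (h 0) z) e x) n\<bar> \<le> Mb n"
  using sum_sup_zx[OF B1_sum(1)] by blast
lemma ME_ex: obtains Mb where "\<forall>n. 0 \<le> Mb n" "summable Mb" "\<forall>n. \<forall>e\<in>V. \<forall>x\<in>{a..b}. \<bar>zx Z (\<lambda>z. d_eps (d_x a b (psi a b I g P (h 0) z)) e x) n\<bar> \<le> Mb n"
  using sum_sup_zx[OF B1_sum(2)] by blast

lemma wq_C1:
  assumes e: "e \<in> V"
  shows "C1 (wq e)" "\<And>x. x \<in> {a..b} \<Longrightarrow> dX a b (wq e) x = (dX a b (L e (h 0)) x - dX a b (h 0) x) / e"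
proof -
  have eq: "wq e = (\<lambda>x. (1/e) * (L e (h 0) x - h 0 x))" unfolding wq_def by (auto simp: field_simps)
  have cd: "C1 (\<lambda>x. L e (h 0) x - h 0 x)" by (rule C1_diff(1)[OF ab Lmap[OF e h0C1] h0C1])
  show "C1 (wq e)" unfolding eq by (rule C1_cmul(1)[OF ab cd])
  fix x assume x: "x \<in> {a..b}"
  show "dX a b (wq e) x = (dX a b (L e (h 0)) x - dX a b (h 0) x) / e"
    unfolding eq C1_cmul(2)[OF ab cd x] C1_diff(2)[OF ab Lmap[OF e h0C1] h0C1 x] by simp
qed

lemma w_sum:
  assumes e: "e \<in> V" and x: "x \<in> {a..b}"
  shows "L e (h 0) x - h 0 x = (\<Sum>n. zx Z (\<lambda>z. psi a b I g P (h 0) z e x) n - zx Z (\<lambda>z. psi a b I g P (h 0) z 0 x) n)"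
proof -
  obtain Mb where Mb: "\<forall>n. 0 \<le> Mb n" "summable Mb" "\<forall>n. \<forall>e\<in>V. \<forall>x\<in>{a..b}. \<bar>zx Z (\<lambda>z. psi a b I g P (h 0) z e x) n\<bar> \<le> Mb n"
    using MP_ex by blast
  have "L e (h 0) x - h 0 x = L e (h 0) x - L 0 (h 0) x" using fix_h[OF V(2) x] by simp
  also have "\<dots> = (\<Sum>n. zx Z (\<lambda>z. psi a b I g P (h 0) z e x) n) - (\<Sum>n. zx Z (\<lambda>z. psi a b I g P (h 0) z 0 x) n)"
    using LP_eq(1)[OF e h0C1 x] LP_eq(1)[OF V(2) h0C1 x] by simp
  also have "\<dots> = (\<Sum>n. zx Z (\<lambda>z. psi a b I g P (h 0) z e x) n - zx Z (\<lambda>z. psi a b I g P (h 0) z 0 x) n)"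
    by (rule suminf_diff) (use zx_summable[OF Mb e x] zx_summable[OF Mb V(2) x] in auto)
  finally show ?thesis .
qed

lemma dw_sum:
  assumes e: "e \<in> V" and x: "x \<in> {a..b}"
  shows "dX a b (L e (h 0)) x - dX a b (h 0) x = (\<Sum>n. zx Z (\<lambda>z. d_x a b (psi a b I g P (h 0) z) e x) n - zx Z (\<lambda>z. d_x a b (psi a b I g P (h 0) z) 0 x) n)"
proof -
  obtain Mb where Mb: "\<forall>n. 0 \<le> Mb n" "summable Mb" "\<forall>n. \<forall>e\<in>V. \<forall>x\<in>{a..b}. \<bar>zx Z (\<lambda>z. d_x a b (psi a b I g P (h 0) z) e x) n\<bar> \<le> Mb n"
    using MQ_ex by blast
  have "dX a b (h 0) x = dX a b (L 0 (h 0)) x" using fix_h[OF V(2)] by (intro dX_cong[OF x]) simp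
  then have "dX a b (L e (h 0)) x - dX a b (h 0) x = dX a b (L e (h 0)) x - dX a b (L 0 (h 0)) x" by simp
  also have "\<dots> = (\<Sum>n. zx Z (\<lambda>z. d_x a b (psi a b I g P (h 0) z) e x) n) - (\<Sum>n. zx Z (\<lambda>z. d_x a b (psi a b I g P (h 0) z) 0 x) n)"
    using TD[OF h0C1 e x] TD[OF h0C1 V(2) x] by simp
  also have "\<dots> = (\<Sum>n. zx Z (\<lambda>z. d_x a b (psi a b I g P (h 0) z) e x) n - zx Z (\<lambda>z. d_x a b (psi a b I g P (h 0) z) 0 x) n)"
    by (rule suminf_diff) (use zx_summable[OF Mb e x] zx_summable[OF Mb V(2) x] in auto)
  finally show ?thesis .
qed

lemma A1:
  assumes ep: "ep > 0"
  shows "eventually (\<lambda>e. \<forall>x\<in>{a..b}. \<bar>wq e x - Dfun x\<bar> \<le> ep) (at 0)"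
proof -
  obtain MD where MD: "\<forall>n. 0 \<le> MD n" "summable MD" "\<forall>n. \<forall>e\<in>V. \<forall>x\<in>{a..b}. \<bar>zx Z (\<lambda>z. d_eps (psi a b I g P (h 0) z) e x) n\<bar> \<le> MD n"
    using MD_ex by blast
  obtain MP where MP: "\<forall>n. 0 \<le> MP n" "summable MP" "\<forall>n. \<forall>e\<in>V. \<forall>x\<in>{a..b}. \<bar>zx Z (\<lambda>z. psi a b I g P (h 0) z e x) n\<bar> \<le> MP n"
    using MP_ex by blast
  have qc: "eventually (\<lambda>e. \<forall>x\<in>{a..b}. \<bar>\<Sum>n. (zx Z (\<lambda>z. psi a b I g P (h 0) z e x) n - zx Z (\<lambda>z. psi a b I g P (h 0) z 0 x) n) / e
      - zx Z (\<lambda>z. d_eps (psi a b I g P (h 0) z) 0 x) n\<bar> \<le> ep) (at 0)"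
  proof (rule quot_conv[OF _ _ MD ep])
    fix z s x assume "z \<in> Z" "s \<in> V" "x \<in> {a..b}"
    then have "(\<lambda>e. psi a b I g P (h 0) z e x) differentiable (at s)" using B1_diff by blast
    then show "((\<lambda>e. psi a b I g P (h 0) z e x) has_real_derivative d_eps (psi a b I g P (h 0) z) s x) (at s)"
      unfolding d_eps_def using DERIV_deriv_iff_real_differentiable by blast
  next
    fix z assume "z \<in> Z"
    then show "continuous_on (V \<times> {a..b}) (\<lambda>(e, y). d_eps (psi a b I g P (h 0) z) e y)" using B1_cont by blast
  qed
  show ?thesis using qc ev_in_open[OF V] ev_nz
  proof eventually_elim
    case (elim e)
    show ?case
    proof
      fix x assume x: "x \<in> {a..b}"
      define A where "A n = zx Z (\<lambda>z. psi a b I g P (h 0) z e x) n - zx Z (\<lambda>z. psi a b I g P (h 0) z 0 x) n" for n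
      have sA: "summable A" unfolding A_def
        using summable_diff[OF zx_summable[OF MP elim(2) x] zx_summable[OF MP V(2) x]] .
      have sD: "summable (\<lambda>n. zx Z (\<lambda>z. d_eps (psi a b I g P (h 0) z) 0 x) n)" using zx_summable[OF MD V(2) x] .
      have "wq e x = (\<Sum>n. A n) / e" unfolding wq_def A_def using w_sum[OF elim(2) x] by simp
      also have "\<dots> = (\<Sum>n. A n / e)" using suminf_divide[OF sA] by simp
      finally have "wq e x - Dfun x = (\<Sum>n. A n / e) - (\<Sum>n. zx Z (\<lambda>z. d_eps (psi a b I g P (h 0) z) 0 x) n)"
        unfolding Dfun_def by simp
      also have "\<dots> = (\<Sum>n. A n / e - zx Z (\<lambda>z. d_eps (psi a b I g P (h 0) z) 0 x) n)"
        by (rule suminf_diff[OF summable_divide[OF sA] sD])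
      finally show "\<bar>wq e x - Dfun x\<bar> \<le> ep" using elim(1) x unfolding A_def by simp
    qed
  qed
qed

lemma A2:
  assumes ep: "ep > 0"
  shows "eventually (\<lambda>e. \<forall>x\<in>{a..b}. \<bar>dX a b (wq e) x - Efun x\<bar> \<le> ep) (at 0)"
proof -
  obtain ME where ME: "\<forall>n. 0 \<le> ME n" "summable ME" "\<forall>n. \<forall>e\<in>V. \<forall>x\<in>{a..b}. \<bar>zx Z (\<lambda>z. d_eps (d_x a b (psi a b I g P (h 0) z)) e x) n\<bar> \<le> ME n"
    using ME_ex by blast
  obtain MQ where MQ: "\<forall>n. 0 \<le> MQ n" "summable MQ" "\<forall>n. \<forall>e\<in>V. \<forall>x\<in>{a..b}. \<bar>zx Z (\<lambda>z. d_x a b (psi a b I g P (h 0) z) e x) n\<bar> \<le> MQ n"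
    using MQ_ex by blast
  have qc: "eventually (\<lambda>e. \<forall>x\<in>{a..b}. \<bar>\<Sum>n. (zx Z (\<lambda>z. d_x a b (psi a b I g P (h 0) z) e x) n - zx Z (\<lambda>z. d_x a b (psi a b I g P (h 0) z) 0 x) n) / e
      - zx Z (\<lambda>z. d_eps (d_x a b (psi a b I g P (h 0) z)) 0 x) n\<bar> \<le> ep) (at 0)"
  proof (rule quot_conv[OF _ _ ME ep])
    fix z s x assume "z \<in> Z" "s \<in> V" "x \<in> {a..b}"
    then have "(\<lambda>e. d_x a b (psi a b I g P (h 0) z) e x) differentiable (at s)" using B1_diff by blast
    then show "((\<lambda>e. d_x a b (psi a b I g P (h 0) z) e x) has_real_derivative d_eps (d_x a b (psi a b I g P (h 0) z)) s x) (at s)"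
      unfolding d_eps_def using DERIV_deriv_iff_real_differentiable by blast
  next
    fix z assume "z \<in> Z"
    then show "continuous_on (V \<times> {a..b}) (\<lambda>(e, y). d_eps (d_x a b (psi a b I g P (h 0) z)) e y)" using B1_cont by blast
  qed
  show ?thesis using qc ev_in_open[OF V] ev_nz
  proof eventually_elim
    case (elim e)
    show ?case
    proof
      fix x assume x: "x \<in> {a..b}"
      define A where "A n = zx Z (\<lambda>z. d_x a b (psi a b I g P (h 0) z) e x) n - zx Z (\<lambda>z. d_x a b (psi a b I g P (h 0) z) 0 x) n" for n
      have sA: "summable A" unfolding A_def
        using summable_diff[OF zx_summable[OF MQ elim(2) x] zx_summable[OF MQ V(2) x]] .
      have sD: "summable (\<lambda>n. zx Z (\<lambda>z. d_eps (d_x a b (psi a b I g P (h 0) z)) 0 x) n)" using zx_summable[OF ME V(2) x] .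
      have "dX a b (wq e) x = (\<Sum>n. A n) / e" unfolding wq_C1(2)[OF elim(2) x] A_def using dw_sum[OF elim(2) x] by simp
      also have "\<dots> = (\<Sum>n. A n / e)" using suminf_divide[OF sA] by simp
      finally have "dX a b (wq e) x - Efun x = (\<Sum>n. A n / e) - (\<Sum>n. zx Z (\<lambda>z. d_eps (d_x a b (psi a b I g P (h 0) z)) 0 x) n)"
        unfolding Efun_def by simp
      also have "\<dots> = (\<Sum>n. A n / e - zx Z (\<lambda>z. d_eps (d_x a b (psi a b I g P (h 0) z)) 0 x) n)"
        by (rule suminf_diff[OF summable_divide[OF sA] sD])
      finally show "\<bar>dX a b (wq e) x - Efun x\<bar> \<le> ep" using elim(1) x unfolding A_def by simp
    qed
  qed
qed

end

context setting begin

lemma D_C1: "C1 Dfun" "\<And>x. x \<in> {a..b} \<Longrightarrow> dX a b Dfun x = Efun x"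
proof -
  define es where "es m = inverse (real (Suc m))" for m
  have fl: "filterlim es (at 0) sequentially"
    unfolding filterlim_at es_def using LIMSEQ_inverse_real_of_nat by simp
  have evV: "eventually (\<lambda>m. es m \<in> V) sequentially"
    by (rule eventually_compose_filterlim[OF ev_in_open[OF V] fl])
  define f where "f m = (if es m \<in> V then wq (es m) else (\<lambda>_. 0))" for m
  have fC: "C1 (f m)" for m unfolding f_def using wq_C1(1) C1_const[OF ab] by simp
  have uf: "eventually (\<lambda>m. \<forall>x\<in>{a..b}. \<bar>f m x - Dfun x\<bar> \<le> ep) sequentially" if "ep > 0" for ep
    using eventually_compose_filterlim[OF A1[OF that] fl] evV
    by eventually_elim (simp add: f_def)
  have ud: "eventually (\<lambda>m. \<forall>x\<in>{a..b}. \<bar>dX a b (f m) x - Efun x\<bar> \<le> ep) sequentially" if "ep > 0" for ep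
    using eventually_compose_filterlim[OF A2[OF that] fl] evV
    by eventually_elim (simp add: f_def)
  show "C1 Dfun" "\<And>x. x \<in> {a..b} \<Longrightarrow> dX a b Dfun x = Efun x"
    using UL[OF ab fC uf ud] by blast+
qed

lemma A3:
  assumes ep: "ep > 0"
  shows "eventually (\<lambda>e. N (\<lambda>x. wq e x - Dfun x) \<le> ep) (at 0)"
proof -
  have e2: "ep/2 > 0" using ep by simp
  show ?thesis using A1[OF e2] A2[OF e2] ev_in_open[OF V]
  proof eventually_elim
    case (elim e)
    have "N (\<lambda>x. wq e x - Dfun x) \<le> ep/2 + ep/2"
    proof (rule N_le)
      show "a \<le> b" using ab by simp
      show "\<bar>wq e x - Dfun x\<bar> \<le> ep/2" if "x \<in> {a..b}" for x using elim(1) that by blast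
      show "\<bar>dX a b (\<lambda>x. wq e x - Dfun x) x\<bar> \<le> ep/2" if x: "x \<in> {a..b}" for x
        using elim(2) x C1_diff(2)[OF ab wq_C1(1)[OF elim(3)] D_C1(1) x] D_C1(2)[OF x] by simp
    qed
    then show ?case by simp
  qed
qed

lemma Iv_wq: "e \<in> V \<Longrightarrow> Iv (wq e) = 0"
proof -
  assume e: "e \<in> V"
  have eq: "wq e = (\<lambda>x. (1/e) * L e (h 0) x + (- 1/e) * h 0 x)" unfolding wq_def by (rule ext) (simp add: diff_divide_distrib)
  show ?thesis unfolding eq Iv_lin[OF Lmap[OF e h0C1] h0C1] Iv_pres[OF e h0C1] by (simp add: field_simps)
qed

lemma Iv_D: "Iv Dfun = 0"
proof -
  have "\<bar>Iv Dfun\<bar> \<le> ep" if ep: "ep > 0" for ep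
  proof -
    have "eventually (\<lambda>e. N (\<lambda>x. wq e x - Dfun x) \<le> ep \<and> e \<in> V) (at 0)"
      using A3[OF ep] ev_in_open[OF V] by (rule eventually_conj)
    then obtain e where e: "N (\<lambda>x. wq e x - Dfun x) \<le> ep" "e \<in> V"
      using eventually_happens'[OF at_neq_bot] by blast
    have c: "C1 (\<lambda>x. wq e x - Dfun x)" by (rule C1_diff(1)[OF ab wq_C1(1)[OF e(2)] D_C1(1)])
    have "Iv (\<lambda>x. wq e x - Dfun x) = Iv (\<lambda>x. 1 * wq e x + (-1) * Dfun x)" by simp
    also have "\<dots> = - Iv Dfun" unfolding Iv_lin[OF wq_C1(1)[OF e(2)] D_C1(1)] Iv_wq[OF e(2)] by simp
    finally have "\<bar>Iv Dfun\<bar> = \<bar>Iv (\<lambda>x. wq e x - Dfun x)\<bar>" by simp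
    also have "\<dots> \<le> N (\<lambda>x. wq e x - Dfun x)" by (rule Iv_bound[OF c])
    finally show ?thesis using e(1) by simp
  qed
  then show ?thesis by (metis abs_le_zero_iff dense_le_bounded linorder_not_le abs_ge_zero order_less_le)
qed

end

context setting begin

lemma L_zero: "e \<in> V \<Longrightarrow> x \<in> {a..b} \<Longrightarrow> L e (\<lambda>y. 0) x = 0"
  using Lin[OF _ C1_const[OF ab] C1_const[OF ab], of e x 0 0 0 0] by simp

lemma L_sum:
  assumes e: "e \<in> V" and fin: "finite A" and c: "\<And>k. k \<in> A \<Longrightarrow> C1 (f k)" and x: "x \<in> {a..b}"
  shows "L e (\<lambda>y. \<Sum>k\<in>A. f k y) x = (\<Sum>k\<in>A. L e (f k) x)"
  using fin c
proof (induction A rule: finite_induct)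
  case empty then show ?case using L_zero[OF e x] by simp
next
  case (insert k A)
  have cA: "C1 (\<lambda>y. \<Sum>k\<in>A. f k y)" using C1_sum[OF ab insert(1), of f] insert.prems by blast
  have IH: "\<And>k. k \<in> A \<Longrightarrow> C1 (f k)" using insert.prems by blast
  have ck: "C1 (f k)" using insert by blast
  have "L e (\<lambda>y. \<Sum>k\<in>insert k A. f k y) x = L e (\<lambda>y. 1 * f k y + 1 * (\<Sum>k\<in>A. f k y)) x"
    using insert(1,2) by simp
  also have "\<dots> = L e (f k) x + L e (\<lambda>y. \<Sum>k\<in>A. f k y) x" using Lin[OF e ck cA x, of 1 1] by simp
  finally show ?case using insert.IH[OF IH] insert(1,2) by simp
qed

lemma Iv_sum:
  assumes fin: "finite A" and c: "\<And>k. k \<in> A \<Longrightarrow> C1 (f k)"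
  shows "Iv (\<lambda>y. \<Sum>k\<in>A. f k y) = (\<Sum>k\<in>A. Iv (f k))"
  using fin c
proof (induction A rule: finite_induct)
  case empty then show ?case by (simp add: trunc_def)
next
  case (insert k A)
  have cA: "C1 (\<lambda>y. \<Sum>k\<in>A. f k y)" using C1_sum[OF ab insert(1), of f] insert.prems by blast
  have IH: "\<And>k. k \<in> A \<Longrightarrow> C1 (f k)" using insert.prems by blast
  have ck: "C1 (f k)" using insert by blast
  have "Iv (\<lambda>y. \<Sum>k\<in>insert k A. f k y) = Iv (\<lambda>y. 1 * f k y + 1 * (\<Sum>k\<in>A. f k y))"
    using insert(1,2) by simp
  also have "\<dots> = Iv (f k) + Iv (\<lambda>y. \<Sum>k\<in>A. f k y)" using Iv_lin[OF ck cA, of 1 1] by simp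
  finally show ?case using insert.IH[OF IH] insert(1,2) by simp
qed

lemma N_sum:
  assumes fin: "finite A" and c: "\<And>k. k \<in> A \<Longrightarrow> C1 (f k)"
  shows "N (\<lambda>y. \<Sum>k\<in>A. f k y) \<le> (\<Sum>k\<in>A. N (f k))"
  using fin c
proof (induction A rule: finite_induct)
  case empty
  have "N (\<lambda>y. 0) \<le> 0 + 0"
    by (rule N_le) (use ab C1_intro(2)[OF ab, of "\<lambda>y. 0" "\<lambda>y. 0"] in auto)
  then show ?case by simp
next
  case (insert k A)
  have cA: "C1 (\<lambda>y. \<Sum>k\<in>A. f k y)" using C1_sum[OF ab insert(1), of f] insert.prems by blast
  have IH: "\<And>k. k \<in> A \<Longrightarrow> C1 (f k)" using insert.prems by blast
  have ck: "C1 (f k)" using insert by blast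
  have "N (\<lambda>y. \<Sum>k\<in>insert k A. f k y) = N (\<lambda>y. f k y + (\<Sum>k\<in>A. f k y))" using insert(1,2) by simp
  also have "\<dots> \<le> N (f k) + N (\<lambda>y. \<Sum>k\<in>A. f k y)" by (rule N_tri[OF ab ck cA])
  finally show ?case using insert.IH[OF IH] insert(1,2) by simp
qed

lemma Iv_powpres: "e \<in> V \<Longrightarrow> C1 \<phi> \<Longrightarrow> Iv ((L e ^^ k) \<phi>) = Iv \<phi>"
proof (induction k)
  case 0 then show ?case by simp
next
  case (Suc k)
  have "Iv ((L e ^^ Suc k) \<phi>) = Iv (L e ((L e ^^ k) \<phi>))" by simp
  also have "\<dots> = Iv ((L e ^^ k) \<phi>)" by (rule Iv_pres[OF Suc.prems(1) Lpow_C1[OF Suc.prems]])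
  finally show ?case using Suc by simp
qed

lemma N_zero: "N (\<lambda>y. 0) = 0"
proof -
  have "N (\<lambda>y. 0) \<le> 0 + 0"
    by (rule N_le) (use ab C1_intro(2)[OF ab, of "\<lambda>y. 0" "\<lambda>y. 0"] in auto)
  moreover have "0 \<le> N (\<lambda>y. 0)" using N_nonneg[OF C1_const[OF ab]] ab by simp
  ultimately show ?thesis by simp
qed

end

locale setting2 = setting +
  fixes \<theta> C :: real
  assumes th: "0 < \<theta>" "\<theta> < 1" "1 \<le> C"
    and gC: "\<And>e n \<phi>. e \<in> V \<Longrightarrow> C1 \<phi> \<Longrightarrow> Iv \<phi> = 0 \<Longrightarrow> N ((L e ^^ n) \<phi>) \<le> C * \<theta> ^ n * N \<phi>"
begin

abbreviation "Dk k \<equiv> (L 0 ^^ k) Dfun"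

lemma Dk_C1: "C1 (Dk k)" using Lpow_C1[OF V(2) D_C1(1)] .
lemma Dk_Iv: "Iv (Dk k) = 0" using Iv_powpres[OF V(2) D_C1(1)] Iv_D by simp
lemma Dk_N: "N (Dk k) \<le> C * N Dfun * \<theta> ^ k" using gC[OF V(2) D_C1(1) Iv_D, of k] by (simp add: algebra_simps)

definition "Sm m x = (\<Sum>k<m. Dk k x)"
definition "hs0 x = (\<Sum>k. Dk k x)"
definition "hs = trunc a b hs0"

lemma Sm_C1: "C1 (Sm m)" "\<And>x. x \<in> {a..b} \<Longrightarrow> dX a b (Sm m) x = (\<Sum>k<m. dX a b (Dk k) x)"
proof -
  have "C1 (\<lambda>x. \<Sum>k<m. Dk k x) \<and> (\<forall>x\<in>{a..b}. dX a b (\<lambda>x. \<Sum>k<m. Dk k x) x = (\<Sum>k<m. dX a b (Dk k) x))"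
    by (rule C1_sum[OF ab finite_lessThan]) (rule Dk_C1)
  then show "C1 (Sm m)" "\<And>x. x \<in> {a..b} \<Longrightarrow> dX a b (Sm m) x = (\<Sum>k<m. dX a b (Dk k) x)"
    unfolding Sm_def by auto
qed

lemma geo: "summable (\<lambda>k. C * N Dfun * \<theta> ^ k)"
  using th by (intro summable_mult summable_geometric) auto

lemma hs0_props: "C1 hs0" "\<And>x. x \<in> {a..b} \<Longrightarrow> dX a b hs0 x = (\<Sum>k. dX a b (Dk k) x)"
proof -
  have b1: "\<And>k y. y \<in> {a..b} \<Longrightarrow> \<bar>Dk k y\<bar> \<le> C * N Dfun * \<theta> ^ k"
    using N_upper(1)[OF Dk_C1] Dk_N order_trans by blast
  have b2: "\<And>k y. y \<in> {a..b} \<Longrightarrow> \<bar>dX a b (Dk k) y\<bar> \<le> C * N Dfun * \<theta> ^ k"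
    using N_upper(2)[OF Dk_C1] Dk_N order_trans by blast
  have uf: "eventually (\<lambda>m. \<forall>x\<in>{a..b}. \<bar>Sm m x - hs0 x\<bar> \<le> ep) sequentially" if "ep > 0" for ep
    unfolding Sm_def hs0_def
    using tail_unif[where f="\<lambda>k y. Dk k y" and S="{a..b}" and M="\<lambda>k. C * N Dfun * \<theta> ^ k" and ep=ep] geo b1 that by blast
  have ud: "eventually (\<lambda>m. \<forall>x\<in>{a..b}. \<bar>dX a b (Sm m) x - (\<Sum>k. dX a b (Dk k) x)\<bar> \<le> ep) sequentially" if "ep > 0" for ep
  proof -
    have "eventually (\<lambda>m. \<forall>x\<in>{a..b}. \<bar>(\<Sum>k<m. dX a b (Dk k) x) - (\<Sum>k. dX a b (Dk k) x)\<bar> \<le> ep) sequentially"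
      using tail_unif[where f="\<lambda>k y. dX a b (Dk k) y" and S="{a..b}" and M="\<lambda>k. C * N Dfun * \<theta> ^ k" and ep=ep] geo b2 that by blast
    then show ?thesis by eventually_elim (simp add: Sm_C1(2))
  qed
  show "C1 hs0" "\<And>x. x \<in> {a..b} \<Longrightarrow> dX a b hs0 x = (\<Sum>k. dX a b (Dk k) x)"
    using UL[OF ab Sm_C1(1) uf ud] by blast+
qed

lemma hs_eq: "x \<in> {a..b} \<Longrightarrow> hs x = hs0 x" unfolding hs_def trunc_def by simp

lemma hs_C1: "C1 hs" using C1_cong[OF hs0_props(1)] hs_eq by metis

lemma NS: "ep > 0 \<Longrightarrow> eventually (\<lambda>m. N (\<lambda>x. hs x - Sm m x) \<le> ep) sequentially"
proof -
  assume ep: "ep > 0"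
  then have e2: "ep/2 > 0" by simp
  have b1: "\<And>k y. y \<in> {a..b} \<Longrightarrow> \<bar>Dk k y\<bar> \<le> C * N Dfun * \<theta> ^ k"
    using N_upper(1)[OF Dk_C1] Dk_N order_trans by blast
  have b2: "\<And>k y. y \<in> {a..b} \<Longrightarrow> \<bar>dX a b (Dk k) y\<bar> \<le> C * N Dfun * \<theta> ^ k"
    using N_upper(2)[OF Dk_C1] Dk_N order_trans by blast
  have t1: "eventually (\<lambda>m. \<forall>x\<in>{a..b}. \<bar>(\<Sum>k<m. Dk k x) - (\<Sum>k. Dk k x)\<bar> \<le> ep/2) sequentially"
    using tail_unif[where f="\<lambda>k y. Dk k y" and S="{a..b}" and M="\<lambda>k. C * N Dfun * \<theta> ^ k" and ep="ep/2"] geo b1 e2 by blast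
  have t2: "eventually (\<lambda>m. \<forall>x\<in>{a..b}. \<bar>(\<Sum>k<m. dX a b (Dk k) x) - (\<Sum>k. dX a b (Dk k) x)\<bar> \<le> ep/2) sequentially"
    using tail_unif[where f="\<lambda>k y. dX a b (Dk k) y" and S="{a..b}" and M="\<lambda>k. C * N Dfun * \<theta> ^ k" and ep="ep/2"] geo b2 e2 by blast
  show ?thesis using t1 t2
  proof eventually_elim
    case (elim m)
    have "N (\<lambda>x. hs x - Sm m x) \<le> ep/2 + ep/2"
    proof (rule N_le)
      show "a \<le> b" using ab by simp
      show "\<bar>hs x - Sm m x\<bar> \<le> ep/2" if x: "x \<in> {a..b}" for x
        using elim(1) x hs_eq[OF x] unfolding Sm_def hs0_def by (simp add: abs_minus_commute)
      show "\<bar>dX a b (\<lambda>x. hs x - Sm m x) x\<bar> \<le> ep/2" if x: "x \<in> {a..b}" for x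
      proof -
        have "dX a b (\<lambda>x. hs x - Sm m x) x = dX a b hs x - dX a b (Sm m) x"
          by (rule C1_diff(2)[OF ab hs_C1 Sm_C1(1) x])
        also have "dX a b hs x = dX a b hs0 x" using hs_eq by (intro dX_cong[OF x]) simp
        finally show ?thesis using elim(2) x hs0_props(2)[OF x] Sm_C1(2)[OF x] by (simp add: abs_minus_commute)
      qed
    qed
    then show ?case by simp
  qed
qed

lemma Iv_Sm: "Iv (Sm m) = 0"
  unfolding Sm_def using Iv_sum[of "{..<m}" Dk] Dk_C1 Dk_Iv by simp

lemma Iv_hs: "Iv hs = 0"
proof -
  have "\<bar>Iv hs\<bar> \<le> ep" if ep: "ep > 0" for ep
  proof -
    obtain m where m: "N (\<lambda>x. hs x - Sm m x) \<le> ep" using eventually_happens'[OF _ NS[OF ep]] by auto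
    have c: "C1 (\<lambda>x. hs x - Sm m x)" by (rule C1_diff(1)[OF ab hs_C1 Sm_C1(1)])
    have "Iv (\<lambda>x. hs x - Sm m x) = Iv (\<lambda>x. 1 * hs x + (-1) * Sm m x)" by simp
    also have "\<dots> = Iv hs" unfolding Iv_lin[OF hs_C1 Sm_C1(1)] Iv_Sm by simp
    finally have "\<bar>Iv hs\<bar> = \<bar>Iv (\<lambda>x. hs x - Sm m x)\<bar>" by simp
    also have "\<dots> \<le> N (\<lambda>x. hs x - Sm m x)" by (rule Iv_bound[OF c])
    finally show ?thesis using m by simp
  qed
  then show ?thesis by (metis abs_le_zero_iff dense_le_bounded linorder_not_le abs_ge_zero order_less_le)
qed

lemma int_hs: "integral\<^sup>L (mX a b) hs = 0"
  using Iv_hs unfolding hs_def trunc_trunc .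

end

context setting2 begin

lemma N_neg: "C1 f \<Longrightarrow> N (\<lambda>x. - f x) \<le> N f"
  using N_cmul[OF ab, of f "-1"] by simp

lemma L1_bound:
  assumes e: "e \<in> V" and c: "C1 \<psi>" and i: "Iv \<psi> = 0"
  shows "N (L e \<psi>) \<le> C * N \<psi>"
proof -
  have "N ((L e ^^ 1) \<psi>) \<le> C * \<theta> ^ 1 * N \<psi>" by (rule gC[OF e c i])
  moreover have "C * \<theta> * N \<psi> \<le> C * N \<psi>"
    using th N_nonneg[OF c] ab by (intro mult_right_mono) (auto intro: mult_left_le)
  ultimately show ?thesis by simp
qed

lemma hs_fix:
  assumes x: "x \<in> {a..b}"
  shows "hs x - L 0 hs x = Dfun x"
proof -
  have "\<bar>hs x - L 0 hs x - Dfun x\<bar> \<le> ep" if ep: "ep > 0" for ep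
  proof -
    have C0: "C > 0" using th by simp
    have e1: "ep / (2 * C) > 0" "ep / 2 > 0" using ep C0 by auto
    obtain m where m1: "N (\<lambda>x. hs x - Sm m x) \<le> ep / (2 * C)" and m2: "N (\<lambda>x. hs x - Sm (Suc m) x) \<le> ep / 2"
    proof -
      obtain N1 where N1: "\<forall>m\<ge>N1. N (\<lambda>x. hs x - Sm m x) \<le> ep / (2 * C)"
        using NS[OF e1(1)] unfolding eventually_sequentially by blast
      obtain N2 where N2: "\<forall>m\<ge>N2. N (\<lambda>x. hs x - Sm m x) \<le> ep / 2"
        using NS[OF e1(2)] unfolding eventually_sequentially by blast
      show ?thesis using that[of "max N1 N2"] N1 N2 by auto
    qed
    have cS: "C1 (Sm m)" by (rule Sm_C1(1))
    define \<psi> where "\<psi> y = 1 * hs y + (-1) * Sm m y" for y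
    have c\<psi>: "C1 \<psi>" unfolding \<psi>_def by (rule C1_lin(1)[OF ab hs_C1 cS])
    have i\<psi>: "Iv \<psi> = 0" unfolding \<psi>_def Iv_lin[OF hs_C1 cS] Iv_hs Iv_Sm by simp
    have N\<psi>: "N \<psi> = N (\<lambda>x. hs x - Sm m x)" unfolding \<psi>_def by simp
    have Lpsi: "L 0 \<psi> x = L 0 hs x - L 0 (Sm m) x"
      unfolding \<psi>_def using Lin[OF V(2) hs_C1 cS x, of 1 "-1"] by simp
    have LS: "L 0 (Sm m) x = (\<Sum>k<m. Dk (Suc k) x)"
    proof -
      have "L 0 (Sm m) x = L 0 (\<lambda>y. \<Sum>k<m. Dk k y) x" unfolding Sm_def ..
      also have "\<dots> = (\<Sum>k<m. L 0 (Dk k) x)" by (rule L_sum[OF V(2) finite_lessThan Dk_C1 x])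
      finally show ?thesis by simp
    qed
    have SS: "Sm (Suc m) x = Dfun x + (\<Sum>k<m. Dk (Suc k) x)"
      unfolding Sm_def using sum.lessThan_Suc_shift[of "\<lambda>k. Dk k x" m] by simp
    have "hs x - L 0 hs x - Dfun x = (hs x - Sm (Suc m) x) - L 0 \<psi> x"
      using Lpsi LS SS by simp
    moreover have "\<bar>hs x - Sm (Suc m) x\<bar> \<le> ep / 2"
      using N_upper(1)[OF C1_diff(1)[OF ab hs_C1 Sm_C1(1)[of "Suc m"]] x] m2 by simp
    moreover have "\<bar>L 0 \<psi> x\<bar> \<le> ep / 2"
    proof -
      have "\<bar>L 0 \<psi> x\<bar> \<le> N (L 0 \<psi>)" by (rule N_upper(1)[OF Lmap[OF V(2) c\<psi>] x])
      also have "\<dots> \<le> C * N \<psi>" by (rule L1_bound[OF V(2) c\<psi> i\<psi>])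
      also have "\<dots> \<le> C * (ep / (2 * C))"
      proof (rule mult_left_mono)
        show "N \<psi> \<le> ep / (2 * C)" using m1 N\<psi> by simp
      qed (use C0 in simp)
      also have "\<dots> = ep / 2" using C0 by simp
      finally show ?thesis .
    qed
    ultimately show ?thesis by linarith
  qed
  then have "\<bar>hs x - L 0 hs x - Dfun x\<bar> = 0"
    by (metis abs_le_zero_iff dense_le_bounded linorder_not_le abs_ge_zero order_less_le)
  then show ?thesis by simp
qed

lemma DELTA:
  "ep > 0 \<Longrightarrow> eventually (\<lambda>e. N (\<lambda>x. (L e ^^ k) Dfun x - Dk k x) \<le> ep) (at 0)"
proof (induction k arbitrary: ep)
  case 0
  then show ?case using N_zero by simp
next
  case (Suc k)
  have C0: "C > 0" using th by simp
  have e1: "ep / (2 * C) > 0" "ep / 2 > 0" using Suc.prems C0 by auto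
  show ?case using Suc.IH[OF e1(1)] SC[OF Dk_C1[of k] e1(2)] ev_in_open[OF V]
  proof eventually_elim
    case (elim e)
    have cE: "C1 ((L e ^^ k) Dfun)" by (rule Lpow_C1[OF elim(3) D_C1(1)])
    define \<Delta> where "\<Delta> y = 1 * (L e ^^ k) Dfun y + (-1) * Dk k y" for y
    have c\<Delta>: "C1 \<Delta>" unfolding \<Delta>_def by (rule C1_lin(1)[OF ab cE Dk_C1])
    have i\<Delta>: "Iv \<Delta> = 0" unfolding \<Delta>_def Iv_lin[OF cE Dk_C1] Iv_powpres[OF elim(3) D_C1(1)] Dk_Iv Iv_D by simp
    have N\<Delta>: "N \<Delta> = N (\<lambda>x. (L e ^^ k) Dfun x - Dk k x)" unfolding \<Delta>_def by simp
    have c2: "C1 (\<lambda>x. L e (Dk k) x - L 0 (Dk k) x)" by (rule C1_diff(1)[OF ab Lmap[OF elim(3) Dk_C1] Lmap[OF V(2) Dk_C1]])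
    have eq: "(L e ^^ Suc k) Dfun x - Dk (Suc k) x = L e \<Delta> x + (L e (Dk k) x - L 0 (Dk k) x)" if x: "x \<in> {a..b}" for x
      unfolding \<Delta>_def using Lin[OF elim(3) cE Dk_C1 x, of 1 "-1"] by simp
    have "N (\<lambda>x. (L e ^^ Suc k) Dfun x - Dk (Suc k) x) = N (\<lambda>x. L e \<Delta> x + (L e (Dk k) x - L 0 (Dk k) x))"
      using eq by (rule N_cong)
    also have "\<dots> \<le> N (L e \<Delta>) + N (\<lambda>x. L e (Dk k) x - L 0 (Dk k) x)"
      by (rule N_tri[OF ab Lmap[OF elim(3) c\<Delta>] c2])
    also have "N (L e \<Delta>) \<le> C * N \<Delta>" by (rule L1_bound[OF elim(3) c\<Delta> i\<Delta>])
    also have "C * N \<Delta> \<le> C * (ep / (2 * C))"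
    proof (rule mult_left_mono)
      show "N \<Delta> \<le> ep / (2 * C)" using elim(1) N\<Delta> by simp
    qed (use C0 in simp)
    also have "C * (ep / (2 * C)) = ep / 2" using C0 by simp
    finally show ?case using elim(2) by simp
  qed
qed

end

lemma N_sub:
  assumes "a < b" "Ck_on 1 {a..b} f" "Ck_on 1 {a..b} g"
  shows "C1norm a b (\<lambda>x. f x - g x) \<le> C1norm a b f + C1norm a b g"
proof -
  have "C1norm a b (\<lambda>x. f x - g x) \<le> (SUP x\<in>{a..b}. \<bar>f x\<bar>) + (SUP x\<in>{a..b}. \<bar>g x\<bar>) +
     ((SUP x\<in>{a..b}. \<bar>dX a b f x\<bar>) + (SUP x\<in>{a..b}. \<bar>dX a b g x\<bar>))"
  proof (rule N_le)
    show "a \<le> b" using assms by simp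
  next
    fix x assume x: "x \<in> {a..b}"
    have "\<bar>f x\<bar> \<le> (SUP x\<in>{a..b}. \<bar>f x\<bar>)" by (rule cSUP_upper[OF x cont_bdd[OF C1_cont[OF assms(2)]]])
    moreover have "\<bar>g x\<bar> \<le> (SUP x\<in>{a..b}. \<bar>g x\<bar>)" by (rule cSUP_upper[OF x cont_bdd[OF C1_cont[OF assms(3)]]])
    ultimately show "\<bar>f x - g x\<bar> \<le> (SUP x\<in>{a..b}. \<bar>f x\<bar>) + (SUP x\<in>{a..b}. \<bar>g x\<bar>)" by linarith
    have "\<bar>dX a b f x\<bar> \<le> (SUP x\<in>{a..b}. \<bar>dX a b f x\<bar>)" by (rule cSUP_upper[OF x cont_bdd[OF C1_dX_cont[OF assms(2)]]])
    moreover have "\<bar>dX a b g x\<bar> \<le> (SUP x\<in>{a..b}. \<bar>dX a b g x\<bar>)" by (rule cSUP_upper[OF x cont_bdd[OF C1_dX_cont[OF assms(3)]]])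
    ultimately show "\<bar>dX a b (\<lambda>x. f x - g x) x\<bar> \<le> (SUP x\<in>{a..b}. \<bar>dX a b f x\<bar>) + (SUP x\<in>{a..b}. \<bar>dX a b g x\<bar>)"
      using C1_diff(2)[OF assms x] by linarith
  qed
  then show ?thesis unfolding C1norm_def by linarith
qed

lemma geo_tail:
  fixes \<theta> :: real
  assumes "0 \<le> \<theta>" "\<theta> < 1"
  shows "(\<Sum>k\<in>{n..<m}. \<theta> ^ k) \<le> \<theta> ^ n / (1 - \<theta>)"
proof (cases "n \<le> m")
  case False then show ?thesis using assms by simp
next
  case True
  then obtain d where d: "m = d + n" by (metis add.commute le_Suc_ex)
  have s: "summable (\<lambda>i. \<theta> ^ n * \<theta> ^ i)" using assms by (intro summable_mult summable_geometric) auto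
  have "(\<Sum>k\<in>{n..<m}. \<theta> ^ k) = (\<Sum>i\<in>{0..<d}. \<theta> ^ (i + n))"
    unfolding d using sum.shift_bounds_nat_ivl[of "\<lambda>k. \<theta> ^ k" 0 n d] by simp
  also have "\<dots> = (\<Sum>i\<in>{0..<d}. \<theta> ^ n * \<theta> ^ i)" by (simp add: power_add mult.commute)
  also have "\<dots> \<le> (\<Sum>i. \<theta> ^ n * \<theta> ^ i)" by (rule sum_le_suminf[OF s]) (use assms in auto)
  also have "\<dots> = \<theta> ^ n / (1 - \<theta>)" using suminf_mult[of "\<lambda>i. \<theta> ^ i" "\<theta> ^ n"] suminf_geometric[of \<theta>] assms
    summable_geometric[of \<theta>] by simp
  finally show ?thesis .
qed

context setting2 begin

definition "uq e x = (h e x - h 0 x) / e"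

lemma uq_eq: "uq e = (\<lambda>x. (1/e) * h e x + (-1/e) * h 0 x)"
  by (rule ext) (simp add: uq_def diff_divide_distrib)

lemma uq_C1: "e \<in> V \<Longrightarrow> C1 (uq e)"
  unfolding uq_eq by (rule C1_lin(1)[OF ab hC1 h0C1])

lemma Iv_uq: "e \<in> V \<Longrightarrow> Iv (uq e) = 0"
proof -
  assume e: "e \<in> V"
  have "Iv (uq e) = (1/e) * Iv (h e) + (-1/e) * Iv (h 0)"
    unfolding uq_eq by (rule Iv_lin[OF hC1[OF e] h0C1])
  then show ?thesis using h_int[OF e] h_int[OF V(2)] by simp
qed

lemma uq_rec:
  assumes e: "e \<in> V" "e \<noteq> 0" and x: "x \<in> {a..b}"
  shows "uq e x = L e (uq e) x + wq e x"
proof -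
  have "L e (uq e) x = (1/e) * L e (h e) x + (-1/e) * L e (h 0) x"
    unfolding uq_eq by (rule Lin[OF e(1) hC1[OF e(1)] h0C1 x])
  also have "\<dots> = (1/e) * h e x + (-1/e) * L e (h 0) x" using fix_h[OF e(1) x] by simp
  finally show ?thesis unfolding uq_def wq_def using e(2) by (simp add: field_simps)
qed

lemma uq_iter:
  assumes e: "e \<in> V" "e \<noteq> 0"
  shows "\<forall>x\<in>{a..b}. uq e x = (L e ^^ m) (uq e) x + (\<Sum>k<m. (L e ^^ k) (wq e) x)"
proof (induction m)
  case 0 then show ?case by simp
next
  case (Suc m)
  show ?case
  proof
    fix x assume x: "x \<in> {a..b}"
    have cu: "C1 (L e (uq e))" by (rule Lmap[OF e(1) uq_C1[OF e(1)]])
    have "(L e ^^ m) (uq e) x = (L e ^^ m) (\<lambda>y. 1 * L e (uq e) y + 1 * wq e y) x"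
      using Lpow_cong[where \<phi>="uq e" and \<psi>="\<lambda>y. 1 * L e (uq e) y + 1 * wq e y" and e=e and n=m] uq_rec[OF e] x by simp
    also have "\<dots> = 1 * (L e ^^ m) (L e (uq e)) x + 1 * (L e ^^ m) (wq e) x"
      using Lpow_lin[OF e(1) cu wq_C1(1)[OF e(1)]] x by blast
    also have "(L e ^^ m) (L e (uq e)) = (L e ^^ Suc m) (uq e)"
      using funpow_Suc_right[of m "L e"] by (simp only: comp_def)
    finally have "(L e ^^ m) (uq e) x = (L e ^^ Suc m) (uq e) x + (L e ^^ m) (wq e) x" by simp
    then show "uq e x = (L e ^^ Suc m) (uq e) x + (\<Sum>k<Suc m. (L e ^^ k) (wq e) x)"
      using Suc.IH x by simp
  qed
qed

end

context setting2 begin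

abbreviation "Dl e k \<equiv> (\<lambda>x. (L e ^^ k) Dfun x - Dk k x)"

lemma Dl_C1: "e \<in> V \<Longrightarrow> C1 (Dl e k)"
  by (rule C1_diff(1)[OF ab Lpow_C1[OF _ D_C1(1)] Dk_C1])

lemma Dl_N: "e \<in> V \<Longrightarrow> N (Dl e k) \<le> 2 * C * N Dfun * \<theta> ^ k"
proof -
  assume e: "e \<in> V"
  have "N (Dl e k) \<le> N ((L e ^^ k) Dfun) + N (Dk k)"
    by (rule N_sub[OF ab Lpow_C1[OF e D_C1(1)] Dk_C1])
  moreover have "N ((L e ^^ k) Dfun) \<le> C * \<theta> ^ k * N Dfun" by (rule gC[OF e D_C1(1) Iv_D])
  moreover have "N (Dk k) \<le> C * N Dfun * \<theta> ^ k" by (rule Dk_N)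
  ultimately show ?thesis by (simp add: algebra_simps)
qed

lemma main_bound:
  assumes e: "e \<in> V" "e \<noteq> 0" and nm: "n \<le> m"
  shows "N (\<lambda>x. uq e x - hs x) \<le> C * \<theta> ^ m * N (uq e) + C / (1 - \<theta>) * N (\<lambda>x. wq e x - Dfun x)
     + (\<Sum>k<n. N (Dl e k)) + 2 * C * N Dfun * \<theta> ^ n / (1 - \<theta>) + N (\<lambda>x. hs x - Sm m x)"
proof -
  define W where "W = (\<lambda>x. wq e x - Dfun x)"
  have cW: "C1 W" unfolding W_def by (rule C1_diff(1)[OF ab wq_C1(1)[OF e(1)] D_C1(1)])
  have iW: "Iv W = 0"
  proof -
    have "Iv W = Iv (\<lambda>x. 1 * wq e x + (-1) * Dfun x)" unfolding W_def by simp
    also have "\<dots> = 0" unfolding Iv_lin[OF wq_C1(1)[OF e(1)] D_C1(1)] Iv_wq[OF e(1)] Iv_D by simp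
    finally show ?thesis .
  qed
  define A where "A = (L e ^^ m) (uq e)"
  define B where "B = (\<lambda>x. \<Sum>k<m. (L e ^^ k) W x)"
  define D1 where "D1 = (\<lambda>x. \<Sum>k<n. Dl e k x)"
  define D2 where "D2 = (\<lambda>x. \<Sum>k\<in>{n..<m}. Dl e k x)"
  define E where "E = (\<lambda>x. Sm m x - hs x)"
  have cA: "C1 A" unfolding A_def by (rule Lpow_C1[OF e(1) uq_C1[OF e(1)]])
  have cB: "C1 B" unfolding B_def using C1_sum[OF ab finite_lessThan, of m "\<lambda>k. (L e ^^ k) W"] Lpow_C1[OF e(1) cW] by blast
  have cD1: "C1 D1" unfolding D1_def using C1_sum[OF ab finite_lessThan, of n "Dl e"] Dl_C1[OF e(1)] by blast
  have cD2: "C1 D2" unfolding D2_def using C1_sum[OF ab finite_atLeastLessThan, of n m "Dl e"] Dl_C1[OF e(1)] by blast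
  have cE: "C1 E" unfolding E_def by (rule C1_diff(1)[OF ab Sm_C1(1) hs_C1])
  have decomp: "uq e x - hs x = A x + B x + D1 x + D2 x + E x" if x: "x \<in> {a..b}" for x
  proof -
    have LW: "(L e ^^ k) W x = (L e ^^ k) (wq e) x - (L e ^^ k) Dfun x" for k
    proof -
      have "(L e ^^ k) W x = (L e ^^ k) (\<lambda>y. 1 * wq e y + (-1) * Dfun y) x" unfolding W_def by simp
      also have "\<dots> = 1 * (L e ^^ k) (wq e) x + (-1) * (L e ^^ k) Dfun x"
        using Lpow_lin[OF e(1) wq_C1(1)[OF e(1)] D_C1(1)] x by blast
      finally show ?thesis by simp
    qed
    have Bx: "B x = (\<Sum>k<m. (L e ^^ k) (wq e) x) - (\<Sum>k<m. (L e ^^ k) Dfun x)"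
      unfolding B_def LW by (simp add: sum_subtractf)
    have split: "(\<Sum>k<m. Dl e k x) = D1 x + D2 x"
      unfolding D1_def D2_def lessThan_atLeast0 using sum.atLeastLessThan_concat[of 0 n m "\<lambda>k. Dl e k x"] nm by simp
    have "(\<Sum>k<m. Dl e k x) = (\<Sum>k<m. (L e ^^ k) Dfun x) - Sm m x"
      unfolding Sm_def by (simp add: sum_subtractf)
    then have "D1 x + D2 x = (\<Sum>k<m. (L e ^^ k) Dfun x) - Sm m x" using split by simp
    moreover have "uq e x = A x + (\<Sum>k<m. (L e ^^ k) (wq e) x)" unfolding A_def using uq_iter[OF e] x by blast
    ultimately show ?thesis using Bx unfolding E_def by simp
  qed
  have "N (\<lambda>x. uq e x - hs x) = N (\<lambda>x. A x + B x + D1 x + D2 x + E x)"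
    using decomp by (rule N_cong)
  also have "\<dots> \<le> N (\<lambda>x. A x + B x + D1 x + D2 x) + N E"
    by (rule N_tri[OF ab C1_add(1)[OF ab C1_add(1)[OF ab C1_add(1)[OF ab cA cB] cD1] cD2] cE])
  also have "N (\<lambda>x. A x + B x + D1 x + D2 x) \<le> N (\<lambda>x. A x + B x + D1 x) + N D2"
    by (rule N_tri[OF ab C1_add(1)[OF ab C1_add(1)[OF ab cA cB] cD1] cD2])
  also have "N (\<lambda>x. A x + B x + D1 x) \<le> N (\<lambda>x. A x + B x) + N D1"
    by (rule N_tri[OF ab C1_add(1)[OF ab cA cB] cD1])
  also have "N (\<lambda>x. A x + B x) \<le> N A + N B"
    by (rule N_tri[OF ab cA cB])
  finally have tot: "N (\<lambda>x. uq e x - hs x) \<le> N A + N B + N D1 + N D2 + N E" by simp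
  have nA: "N A \<le> C * \<theta> ^ m * N (uq e)" unfolding A_def by (rule gC[OF e(1) uq_C1[OF e(1)] Iv_uq[OF e(1)]])
  have nB: "N B \<le> C / (1 - \<theta>) * N W"
  proof -
    have "N B \<le> (\<Sum>k<m. N ((L e ^^ k) W))" unfolding B_def by (rule N_sum[OF finite_lessThan Lpow_C1[OF e(1) cW]])
    also have "\<dots> \<le> (\<Sum>k<m. C * N W * \<theta> ^ k)"
      by (rule sum_mono) (use gC[OF e(1) cW iW] in \<open>simp add: algebra_simps\<close>)
    also have "\<dots> = C * N W * (\<Sum>k\<in>{0..<m}. \<theta> ^ k)" by (simp add: sum_distrib_left lessThan_atLeast0)
    also have "\<dots> \<le> C * N W * (\<theta> ^ 0 / (1 - \<theta>))"
      using geo_tail[of \<theta> 0 m] th N_nonneg[OF cW] ab by (intro mult_left_mono) auto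
    finally show ?thesis by simp
  qed
  have nD1: "N D1 \<le> (\<Sum>k<n. N (Dl e k))" unfolding D1_def by (rule N_sum[OF finite_lessThan Dl_C1[OF e(1)]])
  have nD2: "N D2 \<le> 2 * C * N Dfun * \<theta> ^ n / (1 - \<theta>)"
  proof -
    have "N D2 \<le> (\<Sum>k\<in>{n..<m}. N (Dl e k))" unfolding D2_def by (rule N_sum[OF finite_atLeastLessThan Dl_C1[OF e(1)]])
    also have "\<dots> \<le> (\<Sum>k\<in>{n..<m}. 2 * C * N Dfun * \<theta> ^ k)" by (rule sum_mono) (rule Dl_N[OF e(1)])
    also have "\<dots> = 2 * C * N Dfun * (\<Sum>k\<in>{n..<m}. \<theta> ^ k)" by (simp add: sum_distrib_left)
    also have "\<dots> \<le> 2 * C * N Dfun * (\<theta> ^ n / (1 - \<theta>))"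
      using geo_tail[of \<theta> n m] th N_nonneg[OF D_C1(1)] ab by (intro mult_left_mono) auto
    finally show ?thesis by simp
  qed
  have nE: "N E \<le> N (\<lambda>x. hs x - Sm m x)"
  proof -
    have "E = (\<lambda>x. - (hs x - Sm m x))" unfolding E_def by auto
    then show ?thesis using N_neg[OF C1_diff(1)[OF ab hs_C1 Sm_C1(1)]] by simp
  qed
  show ?thesis using tot nA nB nD1 nD2 nE unfolding W_def by linarith
qed

end

lemma aux_contra:
  fixes X Y t s :: real
  assumes "X \<le> t + Y + s" "t < (X - Y) / 2" "s \<le> (X - Y) / 4" "0 < X - Y" shows False
proof -
  have "X - Y \<le> t + s" using assms(1) by simp
  then show False using assms(2-4) by simp
qed

lemma aux_sum:
  fixes X p q r ep :: real
  shows "X \<le> p + q + r \<Longrightarrow> p \<le> ep / 4 \<Longrightarrow> q \<le> ep / 4 \<Longrightarrow> r < ep / 4 \<Longrightarrow> 0 \<le> X \<Longrightarrow> 0 < ep \<Longrightarrow> dist X 0 < ep"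
  by (simp add: dist_real_def)

context setting2 begin

lemma main_bound2:
  assumes e: "e \<in> V" "e \<noteq> 0"
  shows "N (\<lambda>x. uq e x - hs x) \<le> C / (1 - \<theta>) * N (\<lambda>x. wq e x - Dfun x)
     + (\<Sum>k<n. N (Dl e k)) + 2 * C * N Dfun * \<theta> ^ n / (1 - \<theta>)"
    (is "?X \<le> ?Y")
proof (rule ccontr)
  assume "\<not> ?X \<le> ?Y"
  then have eps: "?X - ?Y > 0" by simp
  define ep where "ep = ?X - ?Y"
  have "(\<lambda>m. \<theta> ^ m) \<longlonglongrightarrow> 0" by (rule LIMSEQ_power_zero) (use th in simp)
  then have "(\<lambda>m. C * N (uq e) * \<theta> ^ m) \<longlonglongrightarrow> C * N (uq e) * 0" by (rule tendsto_mult_left)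
  then have "eventually (\<lambda>m. C * N (uq e) * \<theta> ^ m < ep / 2) sequentially"
    using eps unfolding ep_def by (intro order_tendstoD(2)) auto
  moreover have "eventually (\<lambda>m. N (\<lambda>x. hs x - Sm m x) \<le> ep / 4) sequentially"
    using eps unfolding ep_def by (intro NS) auto
  moreover have "eventually (\<lambda>m. n \<le> m) sequentially" by (rule eventually_ge_at_top)
  ultimately have "eventually (\<lambda>m. C * N (uq e) * \<theta> ^ m < ep / 2 \<and> N (\<lambda>x. hs x - Sm m x) \<le> ep / 4 \<and> n \<le> m) sequentially"
    by eventually_elim blast
  then obtain m where m: "C * N (uq e) * \<theta> ^ m < ep / 2" "N (\<lambda>x. hs x - Sm m x) \<le> ep / 4" "n \<le> m"
    using eventually_happens'[OF sequentially_bot] by blast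
  have "?X \<le> C * \<theta> ^ m * N (uq e) + ?Y + N (\<lambda>x. hs x - Sm m x)"
    using main_bound[OF e m(3)] by simp
  moreover have "C * \<theta> ^ m * N (uq e) = C * N (uq e) * \<theta> ^ m" by simp
  ultimately have "?X \<le> C * N (uq e) * \<theta> ^ m + ?Y + N (\<lambda>x. hs x - Sm m x)" by simp
  from aux_contra[OF this m(1)[unfolded ep_def] m(2)[unfolded ep_def] eps] show False .
qed

lemma main_lim: "((\<lambda>e. N (\<lambda>x. uq e x - hs x)) \<longlongrightarrow> 0) (at 0)"
proof (rule tendstoI)
  fix ep :: real assume ep: "ep > 0"
  have th1: "1 - \<theta> > 0" using th by simp
  have K1: "C / (1 - \<theta>) > 0" using th by simp
  have "(\<lambda>n. \<theta> ^ n) \<longlonglongrightarrow> 0" by (rule LIMSEQ_power_zero) (use th in simp)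
  then have "(\<lambda>n. 2 * C * N Dfun / (1 - \<theta>) * \<theta> ^ n) \<longlonglongrightarrow> 2 * C * N Dfun / (1 - \<theta>) * 0" by (rule tendsto_mult_left)
  then have "eventually (\<lambda>n. 2 * C * N Dfun / (1 - \<theta>) * \<theta> ^ n < ep / 4) sequentially"
    using ep by (intro order_tendstoD(2)) auto
  then obtain n where n: "2 * C * N Dfun / (1 - \<theta>) * \<theta> ^ n < ep / 4"
    unfolding eventually_sequentially by blast
  have e3: "ep / (4 * (C / (1 - \<theta>))) > 0" using ep K1 by (intro divide_pos_pos) auto
  have e4: "ep / (4 * (real n + 1)) > 0" using ep by simp
  have evD: "eventually (\<lambda>e. \<forall>k\<in>{..<n}. N (Dl e k) \<le> ep / (4 * (real n + 1))) (at 0)"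
    by (intro eventually_ball_finite) (use DELTA[OF e4] in auto)
  show "eventually (\<lambda>e. dist (N (\<lambda>x. uq e x - hs x)) 0 < ep) (at 0)"
    using A3[OF e3] evD ev_in_open[OF V] ev_nz
  proof eventually_elim
    case (elim e)
    have b: "N (\<lambda>x. uq e x - hs x) \<le> C / (1 - \<theta>) * N (\<lambda>x. wq e x - Dfun x)
      + (\<Sum>k<n. N (Dl e k)) + 2 * C * N Dfun * \<theta> ^ n / (1 - \<theta>)"
      by (rule main_bound2[OF elim(3,4)])
    have b1: "C / (1 - \<theta>) * N (\<lambda>x. wq e x - Dfun x) \<le> ep / 4"
    proof -
      have "C / (1 - \<theta>) * N (\<lambda>x. wq e x - Dfun x) \<le> C / (1 - \<theta>) * (ep / (4 * (C / (1 - \<theta>))))"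
        using elim(1) K1 by (intro mult_left_mono) auto
      also have "\<dots> = ep / 4" using th by (simp add: field_simps)
      finally show ?thesis .
    qed
    have b2: "(\<Sum>k<n. N (Dl e k)) \<le> ep / 4"
    proof -
      have "(\<Sum>k<n. N (Dl e k)) \<le> (\<Sum>k<n. ep / (4 * (real n + 1)))" using elim(2) by (intro sum_mono) auto
      also have "\<dots> = real n * (ep / (4 * (real n + 1)))" by simp
      also have "\<dots> \<le> ep / 4" using ep by (simp add: field_simps)
      finally show ?thesis .
    qed
    have b3: "2 * C * N Dfun * \<theta> ^ n / (1 - \<theta>) < ep / 4" using n by (simp add: field_simps)
    have nn: "0 \<le> N (\<lambda>x. uq e x - hs x)"
      using N_nonneg[OF C1_diff(1)[OF ab uq_C1[OF elim(3)] hs_C1]] ab by simp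
    show ?case by (rule aux_sum[OF b b1 b2 b3 nn ep])
  qed
qed

lemma der_LP:
  assumes x: "x \<in> {a..b}"
  shows "((\<lambda>e. L e (h 0) x) has_real_derivative Dfun x) (at 0)"
proof -
  have "((\<lambda>y. (L y (h 0) x - L 0 (h 0) x) / (y - 0)) \<longlongrightarrow> Dfun x) (at 0)"
  proof (rule tendstoI)
    fix ep :: real assume ep: "ep > 0"
    then have "ep / 2 > 0" by simp
    show "eventually (\<lambda>y. dist ((L y (h 0) x - L 0 (h 0) x) / (y - 0)) (Dfun x) < ep) (at 0)"
      using A1[OF \<open>ep/2 > 0\<close>]
    proof eventually_elim
      case (elim e)
      then have "\<bar>wq e x - Dfun x\<bar> \<le> ep / 2" using x by blast
      then show ?case using ep fix_h[OF V(2) x] unfolding wq_def by (simp add: dist_real_def)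
    qed
  qed
  then show ?thesis by (simp add: has_field_derivative_iff)
qed

lemma der_psi:
  assumes x: "x \<in> {a..b}"
  shows "((\<lambda>e. \<Sum>\<^sub>\<infinity>z\<in>Z. psi a b I g P (h 0) z e x) has_real_derivative Dfun x) (at 0)"
proof (rule has_field_derivative_transform_within_open[OF der_LP[OF x] V])
  fix e assume e: "e \<in> V"
  show "L e (h 0) x = (\<Sum>\<^sub>\<infinity>z\<in>Z. psi a b I g P (h 0) z e x)"
    using LP_eq[OF e h0C1 x] infsum_Z by simp
qed

lemma concl:
  shows "\<exists>hs D. Ck_on 1 {a..b} hs \<and>
     ((\<lambda>\<epsilon>. C1norm a b (\<lambda>x. (h \<epsilon> x - h 0 x) / \<epsilon> - hs x)) \<longlongrightarrow> 0) (at 0) \<and>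
     (\<forall>x\<in>{a..b}. ((\<lambda>\<epsilon>. LP a b Z I g (P \<epsilon>) (h 0) x) has_real_derivative D x) (at 0) \<and>
                 ((\<lambda>\<epsilon>. \<Sum>\<^sub>\<infinity>z\<in>Z. psi a b I g P (h 0) z \<epsilon> x) has_real_derivative D x) (at 0)) \<and>
     integral\<^sup>L (mX a b) hs = 0 \<and>
     (\<forall>x\<in>{a..b}. hs x - LP a b Z I g (P 0) hs x = D x)"
proof (intro exI conjI ballI)
  show "C1 hs" by (rule hs_C1)
  show "((\<lambda>\<epsilon>. C1norm a b (\<lambda>x. (h \<epsilon> x - h 0 x) / \<epsilon> - hs x)) \<longlongrightarrow> 0) (at 0)"
    using main_lim unfolding uq_def .
  show "((\<lambda>\<epsilon>. LP a b Z I g (P \<epsilon>) (h 0) x) has_real_derivative Dfun x) (at 0)" if "x \<in> {a..b}" for x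
    by (rule der_LP[OF that])
  show "((\<lambda>\<epsilon>. \<Sum>\<^sub>\<infinity>z\<in>Z. psi a b I g P (h 0) z \<epsilon> x) has_real_derivative Dfun x) (at 0)" if "x \<in> {a..b}" for x
    by (rule der_psi[OF that])
  show "integral\<^sup>L (mX a b) hs = 0" by (rule int_hs)
  show "hs x - LP a b Z I g (P 0) hs x = Dfun x" if "x \<in> {a..b}" for x
    by (rule hs_fix[OF that])
qed

end

context setting begin

lemma concl0:
  shows "\<exists>hs D. Ck_on 1 {a..b} hs \<and>
     ((\<lambda>\<epsilon>. C1norm a b (\<lambda>x. (h \<epsilon> x - h 0 x) / \<epsilon> - hs x)) \<longlongrightarrow> 0) (at 0) \<and>
     (\<forall>x\<in>{a..b}. ((\<lambda>\<epsilon>. LP a b Z I g (P \<epsilon>) (h 0) x) has_real_derivative D x) (at 0) \<and>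
                 ((\<lambda>\<epsilon>. \<Sum>\<^sub>\<infinity>z\<in>Z. psi a b I g P (h 0) z \<epsilon> x) has_real_derivative D x) (at 0)) \<and>
     integral\<^sup>L (mX a b) hs = 0 \<and>
     (\<forall>x\<in>{a..b}. hs x - LP a b Z I g (P 0) hs x = D x)"
proof -
  obtain \<theta> C where tc: "0 < \<theta>" "\<theta> < 1" "1 \<le> C"
    and G: "\<And>e n \<phi>. e \<in> V \<Longrightarrow> C1 \<phi> \<Longrightarrow> Iv \<phi> = 0 \<Longrightarrow> N ((L e ^^ n) \<phi>) \<le> C * \<theta> ^ n * N \<phi>"
    using gapC by blast
  interpret s2: setting2 a b M Z I T g P V h \<theta> C
    by (rule setting2.intro[OF setting_axioms setting2_axioms.intro[OF tc G]])
  show ?thesis by (rule s2.concl)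
qed

end

theorem theorem2p3:
  fixes a b :: real and M :: "'w measure" and Z :: "nat set"
    and I :: "nat \<Rightarrow> 'w \<Rightarrow> real set" and T :: "'w \<Rightarrow> real \<Rightarrow> real"
    and g :: "nat \<Rightarrow> 'w \<Rightarrow> real \<Rightarrow> real"
    and P :: "real \<Rightarrow> 'w measure" and V :: "real set"
    and h :: "real \<Rightarrow> real \<Rightarrow> real"
  assumes sys: "branch_system a b Z I T g"
    and V: "open V" "0 \<in> V"
    and P: "\<And>\<epsilon>. \<epsilon> \<in> V \<Longrightarrow> prob_space (P \<epsilon>) \<and> sets (P \<epsilon>) = sets M"
    \<comment> \<open>(B)\<close>
    and gap: "uniform_spectral_gap_C1 a b V (\<lambda>\<epsilon>. LP a b Z I g (P \<epsilon>))"
    and stat: "\<And>\<epsilon>. \<epsilon> \<in> V \<Longrightarrow>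
        stationary_density a b (LP a b Z I g (P \<epsilon>)) (h \<epsilon>) \<and> Ck_on 2 {a..b} (h \<epsilon>) \<and>
        (\<forall>h'. stationary_density a b (LP a b Z I g (P \<epsilon>)) h' \<longrightarrow>
               (AE x in mX a b. h' x = h \<epsilon> x))"
    \<comment> \<open>(B1), with Phi = h 0\<close>
    and B1_diff: "\<And>z \<epsilon> x. z \<in> Z \<Longrightarrow> \<epsilon> \<in> V \<Longrightarrow> x \<in> {a..b} \<Longrightarrow>
        (\<lambda>e. psi a b I g P (h 0) z e x) differentiable (at \<epsilon>) \<and>
        (\<lambda>y. psi a b I g P (h 0) z \<epsilon> y) differentiable (at x within {a..b}) \<and>
        (\<lambda>y. d_eps (psi a b I g P (h 0) z) \<epsilon> y) differentiable (at x within {a..b}) \<and>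
        (\<lambda>e. d_x a b (psi a b I g P (h 0) z) e x) differentiable (at \<epsilon>)"
    and B1_cont: "\<And>z. z \<in> Z \<Longrightarrow>
        continuous_on (V \<times> {a..b}) (\<lambda>(e, y). d_eps (psi a b I g P (h 0) z) e y) \<and>
        continuous_on (V \<times> {a..b}) (\<lambda>(e, y). d_x a b (psi a b I g P (h 0) z) e y) \<and>
        continuous_on (V \<times> {a..b}) (\<lambda>(e, y). d_x a b (d_eps (psi a b I g P (h 0) z)) e y) \<and>
        continuous_on (V \<times> {a..b}) (\<lambda>(e, y). d_eps (d_x a b (psi a b I g P (h 0) z)) e y)"
    and B1_sum: "sum_sup Z V {a..b} (\<lambda>z. d_eps (psi a b I g P (h 0) z)) < \<top>"
                "sum_sup Z V {a..b} (\<lambda>z. d_eps (d_x a b (psi a b I g P (h 0) z))) < \<top>"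
    \<comment> \<open>(B2)\<close>
    and B2: "\<And>\<Phi>. Ck_on 1 {a..b} \<Phi> \<Longrightarrow>
        (\<forall>z\<in>Z. \<forall>\<epsilon>\<in>V. \<forall>x\<in>{a..b}.
            integrable (P \<epsilon>) (\<lambda>\<omega>. bterm a b I g \<Phi> z \<omega> x) \<and>
            (\<lambda>y. psi a b I g P \<Phi> z \<epsilon> y) differentiable (at x within {a..b})) \<and>
        (\<forall>z\<in>Z. continuous_on (V \<times> {a..b}) (\<lambda>(e, y). psi a b I g P \<Phi> z e y) \<and>
                continuous_on (V \<times> {a..b}) (\<lambda>(e, y). d_x a b (psi a b I g P \<Phi> z) e y)) \<and>
        sum_sup Z V {a..b} (psi a b I g P \<Phi>) < \<top> \<and>
        sum_sup Z V {a..b} (\<lambda>z. d_x a b (psi a b I g P \<Phi> z)) < \<top>"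
  shows "\<exists>hs D. Ck_on 1 {a..b} hs \<and>
     ((\<lambda>\<epsilon>. C1norm a b (\<lambda>x. (h \<epsilon> x - h 0 x) / \<epsilon> - hs x)) \<longlongrightarrow> 0) (at 0) \<and>
     (\<forall>x\<in>{a..b}. ((\<lambda>\<epsilon>. LP a b Z I g (P \<epsilon>) (h 0) x) has_real_derivative D x) (at 0) \<and>
                 ((\<lambda>\<epsilon>. \<Sum>\<^sub>\<infinity>z\<in>Z. psi a b I g P (h 0) z \<epsilon> x) has_real_derivative D x) (at 0)) \<and>
     integral\<^sup>L (mX a b) hs = 0 \<and>
     (\<forall>x\<in>{a..b}. hs x - LP a b Z I g (P 0) hs x = D x)"
proof -
  have s: "setting a b M Z I T g P V h"
    by (rule setting.intro[OF sys V P gap stat B1_diff B1_cont B1_sum B2])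
  show ?thesis by (rule setting.concl0[OF s])
qed

end
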